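(* Assume the setting described in the context. If $\epsilon_{\mathbf 0}$ has a probability density $p_\epsilon$ which exists and is Lipschitz continuous, then Condition D holds.
   Context: Let $d\in\mathbb N$. For $i,k\in\mathbb Z^d$ write $i\succeq k$ if $i_\tau\ge k_\tau$ for all $\tau$; $\mathbf 0=(0,\dots,0)$; $[\![a,b]\!]=\{a,\dots,b\}$. Let $(\epsilon_i)_{i\in\mathbb Z^d}$ be i.i.d. real random variables with mean zero and finite second moment, $(a_k)_{k\succeq\mathbf 0}$ real with $\sum a_k^2<\infty$, and $X_i=\sum_{k\succeq\mathbf 0}a_k\epsilon_{i-k}$. For $m\in\mathbb N$, $X_{i,m}=\sum_{k\in[\![0,m-1]\!]^d}a_k\epsilon_{i-k}$. Let $p,p_m$ denote the densities of $X_{\mathbf 0},X_{\mathbf 0,m}$, and for $i\ne\mathbf 0$ let $p_i,p_{i,m}$ denote the joint densities of $(X_{\mathbf 0},X_i)$ and $(X_{\mathbf 0,m},X_{i,m})$. Condition D: (i) the densities $p$ and $p_m$ ($m\in\mathbb N$) exist and are Lipschitz with a common constant $c_0<\infty$ independent of $m$, and $\sup_xp(x)<\infty$, $\sup_m\sup_xp_m(x)<\infty$; (ii) the joint densities $p_i$ and $p_{i,m}$ exist for all $i\ne\mathbf 0$, $m\in\mathbb N$, and $\sup_{i\ne\mathbf 0}\sup_{x,y}p_i(x,y)<\infty$, $\sup_m\sup_{i\ne\mathbf 0}\sup_{x,y}p_{i,m}(x,y)<\infty$.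
   Formalization: Lemma 1 carries the further hypothesis $a_{\mathbf 0}\ne 0$ on the coefficient of $\epsilon_{\mathbf 0}$ in $X_{\mathbf 0}$. The statement above fails without it. *)

theory Defs
  imports "HOL-Probability.Probability"
begin

definition vge :: "int ^ 'd::finite \<Rightarrow> int ^ 'd \<Rightarrow> bool" where
  "vge i k \<longleftrightarrow> (\<forall>\<tau>. k $ \<tau> \<le> i $ \<tau>)"

definition cube :: "nat \<Rightarrow> (int ^ 'd::finite) set" where
  "cube m = {k. \<forall>\<tau>. 0 \<le> k $ \<tau> \<and> k $ \<tau> \<le> int m - 1}"

definition Xtr :: "(int ^ 'd::finite \<Rightarrow> real) \<Rightarrow> (int ^ 'd \<Rightarrow> 'a \<Rightarrow> real)
    \<Rightarrow> int ^ 'd \<Rightarrow> nat \<Rightarrow> 'a \<Rightarrow> real" where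
  "Xtr a \<epsilon> i m \<omega> = (\<Sum>k\<in>cube m. a k * \<epsilon> (i - k) \<omega>)"

text \<open>The linear field X_i = sum over k succeq 0 of a_k eps_{i-k}, realised as the
  (almost sure, and L2) limit of the cube partial sums.\<close>
definition Xlin :: "(int ^ 'd::finite \<Rightarrow> real) \<Rightarrow> (int ^ 'd \<Rightarrow> 'a \<Rightarrow> real)
    \<Rightarrow> int ^ 'd \<Rightarrow> 'a \<Rightarrow> real" where
  "Xlin a \<epsilon> i \<omega> = lim (\<lambda>m. Xtr a \<epsilon> i m \<omega>)"

definition conditionD :: "'a measure \<Rightarrow> (int ^ 'd::finite \<Rightarrow> real)
    \<Rightarrow> (int ^ 'd \<Rightarrow> 'a \<Rightarrow> real) \<Rightarrow> bool" where
  "conditionD M a \<epsilon> \<longleftrightarrow>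
    (\<exists>(p :: real \<Rightarrow> real) (pm :: nat \<Rightarrow> real \<Rightarrow> real) (c0 :: real).
       (\<forall>x. 0 \<le> p x) \<and>
       distributed M lborel (Xlin a \<epsilon> 0) (\<lambda>x. ennreal (p x)) \<and>
       lipschitz_on c0 UNIV p \<and>
       (\<forall>m\<ge>1. (\<forall>x. 0 \<le> pm m x) \<and>
          distributed M lborel (Xtr a \<epsilon> 0 m) (\<lambda>x. ennreal (pm m x)) \<and>
          lipschitz_on c0 UNIV (pm m)) \<and>
       bdd_above (range p) \<and>
       bdd_above {pm m x | m x. m \<ge> 1}) \<and>
    (\<exists>(q :: int ^ 'd \<Rightarrow> real \<times> real \<Rightarrow> real) (qm :: nat \<Rightarrow> int ^ 'd \<Rightarrow> real \<times> real \<Rightarrow> real).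
       (\<forall>i. i \<noteq> 0 \<longrightarrow> (\<forall>xy. 0 \<le> q i xy) \<and>
          distributed M (lborel \<Otimes>\<^sub>M lborel) (\<lambda>\<omega>. (Xlin a \<epsilon> 0 \<omega>, Xlin a \<epsilon> i \<omega>))
            (\<lambda>xy. ennreal (q i xy))) \<and>
       (\<forall>m\<ge>1. \<forall>i. i \<noteq> 0 \<longrightarrow> (\<forall>xy. 0 \<le> qm m i xy) \<and>
          distributed M (lborel \<Otimes>\<^sub>M lborel) (\<lambda>\<omega>. (Xtr a \<epsilon> 0 m \<omega>, Xtr a \<epsilon> i m \<omega>))
            (\<lambda>xy. ennreal (qm m i xy))) \<and>
       bdd_above {q i xy | i xy. i \<noteq> 0} \<and>
       bdd_above {qm m i xy | m i xy. m \<ge> 1 \<and> i \<noteq> 0})"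

end

theory Submission
  imports Defs
begin


context prob_space begin

lemma indep_block:
  assumes ind: "indep_vars (\<lambda>_. borel) X I" and AB: "A \<inter> B = {}" "A \<subseteq> I" "B \<subseteq> I"
    and f: "f \<in> measurable (PiM A (\<lambda>_. borel)) N1" and g: "g \<in> measurable (PiM B (\<lambda>_. borel)) N2"
  shows "indep_var N1 (\<lambda>\<omega>. f (\<lambda>i\<in>A. X i \<omega>)) N2 (\<lambda>\<omega>. g (\<lambda>i\<in>B. X i \<omega>))"
  using indep_var_compose[OF indep_var_restrict[OF ind AB] f g] by (simp add: comp_def)

lemma indep_var_cong':
  assumes iv: "indep_var N1 X1 N2 X2" and e1: "\<And>x. x\<in>space M \<Longrightarrow> X1 x = Y1 x"
    and e2: "\<And>x. x\<in>space M \<Longrightarrow> X2 x = Y2 x"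
  shows "indep_var N1 Y1 N2 Y2"
proof -
  have p1: "X1 -` A \<inter> space M = Y1 -` A \<inter> space M" for A using e1 by auto
  have p2: "X2 -` A \<inter> space M = Y2 -` A \<inter> space M" for A using e2 by auto
  have m1: "random_variable N1 Y1" using indep_var_rv1[OF iv] e1 measurable_cong by metis
  have m2: "random_variable N2 Y2" using indep_var_rv2[OF iv] e2 measurable_cong by metis
  have eq: "(\<lambda>i. {case_bool X1 X2 i -` A \<inter> space M |A. A \<in> sets (case_bool N1 N2 i)}) =
     (\<lambda>i. {case_bool Y1 Y2 i -` A \<inter> space M |A. A \<in> sets (case_bool N1 N2 i)})"
    by (rule ext) (auto split: bool.split simp: p1 p2)
  show ?thesis using iv m1 m2 unfolding indep_var_def indep_vars_def2 eq
    by (auto split: bool.split)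
qed

lemma indep_sum_sq:
  fixes Z :: "'i \<Rightarrow> 'a \<Rightarrow> real"
  assumes ind: "indep_vars (\<lambda>_. borel) Z I" and F: "finite F" "F \<subseteq> I"
    and int1: "\<And>j. j\<in>F \<Longrightarrow> integrable M (Z j)"
    and int2: "\<And>j. j\<in>F \<Longrightarrow> integrable M (\<lambda>\<omega>. (Z j \<omega>)^2)"
    and mz: "\<And>j. j\<in>F \<Longrightarrow> expectation (Z j) = 0"
  shows "integrable M (\<lambda>\<omega>. (\<Sum>j\<in>F. Z j \<omega>)^2) \<and>
         expectation (\<lambda>\<omega>. (\<Sum>j\<in>F. Z j \<omega>)^2) = (\<Sum>j\<in>F. expectation (\<lambda>\<omega>. (Z j \<omega>)^2))"
  using F int1 int2 mz
proof (induction F rule: finite_induct)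
  case empty
  then show ?case by simp
next
  case (insert x F)
  have IH: "integrable M (\<lambda>\<omega>. (\<Sum>j\<in>F. Z j \<omega>)^2)"
     "expectation (\<lambda>\<omega>. (\<Sum>j\<in>F. Z j \<omega>)^2) = (\<Sum>j\<in>F. expectation (\<lambda>\<omega>. (Z j \<omega>)^2))"
    using insert by auto
  have iS: "integrable M (\<lambda>\<omega>. \<Sum>j\<in>F. Z j \<omega>)" using insert by auto
  have ix: "integrable M (Z x)" "integrable M (\<lambda>\<omega>. (Z x \<omega>)^2)" "expectation (Z x) = 0"
    using insert by auto
  have iv: "indep_var borel (\<lambda>\<omega>. (\<lambda>f. \<Sum>j\<in>F. f j) (\<lambda>i\<in>F. Z i \<omega>)) borel (\<lambda>\<omega>. (\<lambda>f. f x) (\<lambda>i\<in>{x}. Z i \<omega>))"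
    by (rule indep_block[OF ind]) (use insert in auto)
  have iv': "indep_var borel (\<lambda>\<omega>. \<Sum>j\<in>F. Z j \<omega>) borel (Z x)"
    using iv by (simp cong: sum.cong)
  have prod_int: "integrable M (\<lambda>\<omega>. (\<Sum>j\<in>F. Z j \<omega>) * Z x \<omega>)"
    using indep_var_integrable[OF iv' iS ix(1)] .
  have prod_E: "expectation (\<lambda>\<omega>. (\<Sum>j\<in>F. Z j \<omega>) * Z x \<omega>) = 0"
    using indep_var_lebesgue_integral[OF iv' iS ix(1)] ix(3) by simp
  have eq: "(\<lambda>\<omega>. (\<Sum>j\<in>insert x F. Z j \<omega>)^2) =
    (\<lambda>\<omega>. (\<Sum>j\<in>F. Z j \<omega>)^2 + 2 * ((\<Sum>j\<in>F. Z j \<omega>) * Z x \<omega>) + (Z x \<omega>)^2)"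
    using insert by (auto simp: power2_eq_square algebra_simps)
  show ?case unfolding eq using IH prod_int prod_E ix insert(1,2)
    by (simp add: Bochner_Integration.integral_add)
qed

lemma kolm_max:
  fixes Z :: "nat \<Rightarrow> 'a \<Rightarrow> real"
  assumes ind: "indep_vars (\<lambda>_. borel) Z UNIV"
    and int1: "\<And>j. integrable M (Z j)"
    and int2: "\<And>j. integrable M (\<lambda>\<omega>. (Z j \<omega>)^2)"
    and mz: "\<And>j. expectation (Z j) = 0"
    and t: "t > 0"
  shows "t^2 * prob {\<omega>\<in>space M. \<exists>k\<in>{n..N}. t \<le> \<bar>\<Sum>j\<in>{n..<k}. Z j \<omega>\<bar>}
           \<le> (\<Sum>j\<in>{n..<N}. expectation (\<lambda>\<omega>. (Z j \<omega>)^2))"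
proof -
  have Zm[measurable]: "Z j \<in> borel_measurable M" for j
    using ind unfolding indep_vars_def by auto
  define S where "S k \<omega> = (\<Sum>j\<in>{n..<k}. Z j \<omega>)" for k \<omega>
  have Sm[measurable]: "S k \<in> borel_measurable M" for k unfolding S_def by measurable
  define A where "A k = {\<omega>\<in>space M. t \<le> \<bar>S k \<omega>\<bar> \<and> (\<forall>j\<in>{n..<k}. \<bar>S j \<omega>\<bar> < t)}" for k
  have Aev[measurable]: "A k \<in> sets M" for k unfolding A_def by measurable
  have disj: "disjoint_family_on A {n..N}"
    unfolding disjoint_family_on_def A_def
    by (auto, metis atLeastLessThan_iff linorder_neqE_nat not_le order_refl less_le_trans)
  have Un: "{\<omega>\<in>space M. \<exists>k\<in>{n..N}. t \<le> \<bar>S k \<omega>\<bar>} = (\<Union>k\<in>{n..N}. A k)"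
  proof
    show "(\<Union>k\<in>{n..N}. A k) \<subseteq> {\<omega>\<in>space M. \<exists>k\<in>{n..N}. t \<le> \<bar>S k \<omega>\<bar>}"
      unfolding A_def by auto
  next
    show "{\<omega>\<in>space M. \<exists>k\<in>{n..N}. t \<le> \<bar>S k \<omega>\<bar>} \<subseteq> (\<Union>k\<in>{n..N}. A k)"
    proof safe
      fix \<omega> k assume \<omega>: "\<omega> \<in> space M" and k: "k \<in> {n..N}" "t \<le> \<bar>S k \<omega>\<bar>"
      define k0 where "k0 = (LEAST k. k \<in> {n..N} \<and> t \<le> \<bar>S k \<omega>\<bar>)"
      have k0: "k0 \<in> {n..N} \<and> t \<le> \<bar>S k0 \<omega>\<bar>"
        unfolding k0_def by (rule LeastI[of _ k]) (use k in auto)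
      have "\<bar>S j \<omega>\<bar> < t" if "j \<in> {n..<k0}" for j
      proof (rule ccontr)
        assume "\<not> \<bar>S j \<omega>\<bar> < t"
        then have "k0 \<le> j" unfolding k0_def using that k0
          by (intro Least_le) auto
        then show False using that by auto
      qed
      then show "\<omega> \<in> (\<Union>k\<in>{n..N}. A k)" using k0 \<omega> unfolding A_def by auto
    qed
  qed
  have iS: "integrable M (S k)" for k unfolding S_def using int1 by auto
  have iS2: "integrable M (\<lambda>\<omega>. (S k \<omega>)^2) \<and> expectation (\<lambda>\<omega>. (S k \<omega>)^2) = (\<Sum>j\<in>{n..<k}. expectation (\<lambda>\<omega>. (Z j \<omega>)^2))" for k
    unfolding S_def by (rule indep_sum_sq[OF ind]) (use int1 int2 mz in auto)
  have step: "t^2 * prob (A k) \<le> expectation (\<lambda>\<omega>. (S N \<omega>)^2 * indicator (A k) \<omega>)" if k: "k \<in> {n..N}" for k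
  proof -
    define T where "T \<omega> = (\<Sum>j\<in>{k..<N}. Z j \<omega>)" for \<omega>
    have iT: "integrable M T" unfolding T_def using int1 by auto
    have iT2: "integrable M (\<lambda>\<omega>. (T \<omega>)^2)"
      unfolding T_def using indep_sum_sq[OF ind, of "{k..<N}"] int1 int2 mz by auto
    have SN: "S N \<omega> = S k \<omega> + T \<omega>" for \<omega>
      unfolding S_def T_def using k by (simp add: sum.atLeastLessThan_concat)
    define f where "f x = (\<Sum>j\<in>{n..<k}. x j) * indicator {x. t \<le> \<bar>\<Sum>j\<in>{n..<k}. x j\<bar> \<and> (\<forall>j\<in>{n..<k}. \<bar>\<Sum>i\<in>{n..<j}. x i\<bar> < t)} x" for x :: "nat \<Rightarrow> real"
    have fm: "f \<in> borel_measurable (PiM {n..<k} (\<lambda>_. borel))"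
      unfolding f_def by measurable
    have gm: "(\<lambda>x::nat\<Rightarrow>real. \<Sum>j\<in>{k..<N}. x j * 1) \<in> borel_measurable (PiM {k..<N} (\<lambda>_. borel))"
      by measurable
    have iv0: "indep_var borel (\<lambda>\<omega>. f (\<lambda>i\<in>{n..<k}. Z i \<omega>)) borel (\<lambda>\<omega>. (\<lambda>x. \<Sum>j\<in>{k..<N}. x j * 1) (\<lambda>i\<in>{k..<N}. Z i \<omega>))"
      by (rule indep_block[OF ind _ _ _ fm gm]) auto
    have feq: "f (\<lambda>i\<in>{n..<k}. Z i \<omega>) = S k \<omega> * indicator (A k) \<omega>" if "\<omega> \<in> space M" for \<omega>
    proof -
      have rs: "(\<Sum>i\<in>{n..<j}. (\<lambda>i\<in>{n..<k}. Z i \<omega>) i) = S j \<omega>" if "j \<le> k" for j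
        unfolding S_def using that by (intro sum.cong) auto
      have rs': "\<forall>j\<in>{n..<k}. (\<Sum>i\<in>{n..<j}. (\<lambda>i\<in>{n..<k}. Z i \<omega>) i) = S j \<omega>"
        using rs by auto
      show ?thesis unfolding f_def using rs[of k] rs' that
        by (simp add: A_def indicator_def)
    qed
    have iv: "indep_var borel (\<lambda>\<omega>. S k \<omega> * indicator (A k) \<omega>) borel T"
      using iv0 unfolding T_def
      by (rule indep_var_cong') (auto simp: feq intro!: sum.cong)
    have iSA: "integrable M (\<lambda>\<omega>. S k \<omega> * indicator (A k) \<omega>)"
      by (rule integrable_real_mult_indicator) (auto simp: iS)
    have ET: "expectation T = 0" unfolding T_def using int1 mz by simp
    have iP: "integrable M (\<lambda>\<omega>. (S k \<omega> * indicator (A k) \<omega>) * T \<omega>)"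
      using indep_var_integrable[OF iv iSA iT] .
    have EP: "expectation (\<lambda>\<omega>. (S k \<omega> * indicator (A k) \<omega>) * T \<omega>) = 0"
      using indep_var_lebesgue_integral[OF iv iSA iT] ET by simp
    have iS2A: "integrable M (\<lambda>\<omega>. (S k \<omega>)^2 * indicator (A k) \<omega>)"
      by (rule integrable_real_mult_indicator) (use iS2 in auto)
    have iT2A: "integrable M (\<lambda>\<omega>. (T \<omega>)^2 * indicator (A k) \<omega>)"
      by (rule integrable_real_mult_indicator) (use iT2 in auto)
    have peq: "(S N \<omega>)^2 * indicator (A k) \<omega> = (S k \<omega>)^2 * indicator (A k) \<omega>
        + 2 * ((S k \<omega> * indicator (A k) \<omega>) * T \<omega>) + (T \<omega>)^2 * indicator (A k) \<omega>" for \<omega>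
      unfolding SN by (simp add: power2_eq_square indicator_def algebra_simps)
    have "expectation (\<lambda>\<omega>. (S N \<omega>)^2 * indicator (A k) \<omega>) =
        expectation (\<lambda>\<omega>. (S k \<omega>)^2 * indicator (A k) \<omega>) + 2 * 0
        + expectation (\<lambda>\<omega>. (T \<omega>)^2 * indicator (A k) \<omega>)"
      unfolding peq using iS2A iP iT2A EP by simp
    moreover have "expectation (\<lambda>\<omega>. (T \<omega>)^2 * indicator (A k) \<omega>) \<ge> 0"
      by (rule integral_nonneg_AE) auto
    moreover have "t^2 * prob (A k) \<le> expectation (\<lambda>\<omega>. (S k \<omega>)^2 * indicator (A k) \<omega>)"
    proof -
      have "t^2 * prob (A k) = expectation (\<lambda>\<omega>. t^2 * indicator (A k) \<omega>)"
        by simp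
      also have "\<dots> \<le> expectation (\<lambda>\<omega>. (S k \<omega>)^2 * indicator (A k) \<omega>)"
      proof (rule integral_mono)
        show "integrable M (\<lambda>\<omega>. t^2 * indicator (A k) \<omega>)"
          using integrable_real_indicator[of "A k" M] by (simp add: emeasure_eq_measure)
        show "integrable M (\<lambda>\<omega>. (S k \<omega>)^2 * indicator (A k) \<omega>)" by (rule iS2A)
        fix \<omega> assume "\<omega> \<in> space M"
        show "t^2 * indicator (A k) \<omega> \<le> (S k \<omega>)^2 * indicator (A k) \<omega>"
        proof (cases "\<omega> \<in> A k")
          case True
          then have "t \<le> \<bar>S k \<omega>\<bar>" unfolding A_def by auto
          then have "t^2 \<le> \<bar>S k \<omega>\<bar>^2" using t by (intro power_mono) auto
          then show ?thesis using True by simp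
        qed simp
      qed
      finally show ?thesis .
    qed
    ultimately show ?thesis by linarith
  qed
  have "t^2 * prob {\<omega>\<in>space M. \<exists>k\<in>{n..N}. t \<le> \<bar>S k \<omega>\<bar>} = (\<Sum>k\<in>{n..N}. t^2 * prob (A k))"
    unfolding Un by (subst finite_measure_finite_Union) (auto simp: disj sum_distrib_left)
  also have "\<dots> \<le> (\<Sum>k\<in>{n..N}. expectation (\<lambda>\<omega>. (S N \<omega>)^2 * indicator (A k) \<omega>))"
    by (rule sum_mono) (rule step)
  also have "\<dots> = expectation (\<lambda>\<omega>. \<Sum>k\<in>{n..N}. (S N \<omega>)^2 * indicator (A k) \<omega>)"
    by (rule Bochner_Integration.integral_sum[symmetric]) (rule integrable_real_mult_indicator, auto simp: iS2)
  also have "\<dots> \<le> expectation (\<lambda>\<omega>. (S N \<omega>)^2)"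
  proof (rule integral_mono)
    show "integrable M (\<lambda>\<omega>. \<Sum>k\<in>{n..N}. (S N \<omega>)^2 * indicator (A k) \<omega>)"
      by (intro Bochner_Integration.integrable_sum integrable_real_mult_indicator) (auto simp: iS2)
    show "integrable M (\<lambda>\<omega>. (S N \<omega>)^2)" using iS2 by auto
    fix \<omega>
    have "(\<Sum>k\<in>{n..N}. (S N \<omega>)^2 * indicator (A k) \<omega>) = (S N \<omega>)^2 * indicator (\<Union>k\<in>{n..N}. A k) \<omega>"
      by (simp add: indicator_UN_disjoint[OF _ disj] sum_distrib_left)
    also have "\<dots> \<le> (S N \<omega>)^2" by (simp add: indicator_def)
    finally show "(\<Sum>k\<in>{n..N}. (S N \<omega>)^2 * indicator (A k) \<omega>) \<le> (S N \<omega>)^2" .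
  qed
  also have "\<dots> = (\<Sum>j\<in>{n..<N}. expectation (\<lambda>\<omega>. (Z j \<omega>)^2))" using iS2 by auto
  finally show ?thesis unfolding S_def .
qed

lemma kolm_conv:
  fixes Z :: "nat \<Rightarrow> 'a \<Rightarrow> real"
  assumes ind: "indep_vars (\<lambda>_. borel) Z UNIV"
    and int1: "\<And>j. integrable M (Z j)"
    and int2: "\<And>j. integrable M (\<lambda>\<omega>. (Z j \<omega>)^2)"
    and mz: "\<And>j. expectation (Z j) = 0"
    and sm: "summable (\<lambda>j. expectation (\<lambda>\<omega>. (Z j \<omega>)^2))"
  shows "AE \<omega> in M. convergent (\<lambda>k. \<Sum>j<k. Z j \<omega>)"
proof -
  have Zm[measurable]: "Z j \<in> borel_measurable M" for j
    using ind unfolding indep_vars_def by auto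
  define v where "v j = expectation (\<lambda>\<omega>. (Z j \<omega>)^2)" for j
  have v0: "0 \<le> v j" for j unfolding v_def by simp
  define R where "R n = (\<Sum>j. v (j + n))" for n
  have smv: "summable v" using sm unfolding v_def .
  have R0: "R \<longlonglongrightarrow> 0"
  proof -
    have "(\<lambda>n. suminf v - (\<Sum>i<n. v i)) \<longlonglongrightarrow> suminf v - suminf v"
      by (intro tendsto_diff tendsto_const summable_LIMSEQ smv)
    then show ?thesis unfolding R_def using suminf_minus_initial_segment[OF smv] by simp
  qed
  have tailsum: "(\<Sum>j\<in>{n..<N}. v j) \<le> R n" for n N
  proof -
    have "(\<Sum>j\<in>{n..<N}. v j) = (\<Sum>j\<in>{..<N-n}. v (j + n))"
    proof (cases "n \<le> N")
      case True
      then show ?thesis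
        by (intro sum.reindex_bij_witness[of _ "\<lambda>j. j + n" "\<lambda>j. j - n"]) auto
    qed simp
    also have "\<dots> \<le> R n" unfolding R_def
      by (rule sum_le_suminf) (use smv v0 in \<open>auto simp: summable_iff_shift\<close>)
    finally show ?thesis .
  qed
  define B where "B t = {\<omega>\<in>space M. \<forall>n. \<exists>k\<ge>n. t \<le> \<bar>\<Sum>j\<in>{n..<k}. Z j \<omega>\<bar>}" for t :: real
  have Bm[measurable]: "B t \<in> sets M" for t unfolding B_def by measurable
  have Bnull: "B t \<in> null_sets M" if t: "t > 0" for t
  proof -
    have bound: "measure M (B t) \<le> R n / t^2" for n
    proof -
      define F where "F N = {\<omega>\<in>space M. \<exists>k\<in>{n..N}. t \<le> \<bar>\<Sum>j\<in>{n..<k}. Z j \<omega>\<bar>}" for N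
      have Fm: "F N \<in> sets M" for N unfolding F_def by measurable
      have inc: "incseq F" unfolding incseq_def F_def by fastforce
      have FB: "B t \<subseteq> (\<Union>N. F N)" unfolding B_def F_def by fastforce
      have lim: "(\<lambda>N. measure M (F N)) \<longlonglongrightarrow> measure M (\<Union>N. F N)"
        by (rule finite_Lim_measure_incseq) (use Fm inc in auto)
      have "measure M (F N) \<le> R n / t^2" for N
      proof -
        have "t^2 * measure M (F N) \<le> (\<Sum>j\<in>{n..<N}. v j)"
          unfolding F_def v_def by (rule kolm_max[OF ind int1 int2 mz t])
        also have "\<dots> \<le> R n" by (rule tailsum)
        finally show ?thesis using t by (simp add: field_simps)
      qed
      then have "measure M (\<Union>N. F N) \<le> R n / t^2"
        using lim by (intro LIMSEQ_le_const2) auto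
      moreover have "measure M (B t) \<le> measure M (\<Union>N. F N)"
        using FB Fm by (intro finite_measure_mono) auto
      ultimately show ?thesis by linarith
    qed
    have "(\<lambda>n. R n / t^2) \<longlonglongrightarrow> 0 / t^2" by (intro tendsto_divide R0 tendsto_const) (use t in auto)
    then have "measure M (B t) \<le> 0" using bound by (intro LIMSEQ_le_const) auto
    then have "measure M (B t) = 0" using measure_nonneg[of M "B t"] by linarith
    then show ?thesis using Bm by (simp add: null_sets_def emeasure_eq_measure)
  qed
  have "AE \<omega> in M. \<forall>r::nat. \<omega> \<notin> B (1 / (real r + 1))"
    unfolding AE_all_countable
  proof
    fix r :: nat
    show "AE \<omega> in M. \<omega> \<notin> B (1 / (real r + 1))"
      by (rule AE_I'[OF Bnull]) auto
  qed
  then show ?thesis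
  proof (rule AE_mp[OF _ AE_I2], intro impI)
    fix \<omega> assume \<omega>: "\<omega> \<in> space M" and nb: "\<forall>r::nat. \<omega> \<notin> B (1 / (real r + 1))"
    have "Cauchy (\<lambda>k. \<Sum>j<k. Z j \<omega>)"
    proof (rule CauchyI)
      fix e :: real assume e: "0 < e"
      obtain r :: nat where r: "r > 0" "inverse (real r) < e / 2"
        using ex_inverse_of_nat_less[of "e/2"] e by auto
      have "\<omega> \<notin> B (1 / (real r + 1))" using nb by auto
      then obtain n where n: "\<forall>k\<ge>n. \<bar>\<Sum>j\<in>{n..<k}. Z j \<omega>\<bar> < 1 / (real r + 1)"
        using \<omega> unfolding B_def by (auto simp: not_le) (meson not_le)
      have small: "1 / (real r + 1) < e / 2"
      proof -
        have "1 / (real r + 1) \<le> inverse (real r)" using r by (simp add: field_simps)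
        then show ?thesis using r by linarith
      qed
      have ps: "(\<Sum>j<k. Z j \<omega>) = (\<Sum>j<n. Z j \<omega>) + (\<Sum>j\<in>{n..<k}. Z j \<omega>)" if "k \<ge> n" for k
        using sum.atLeastLessThan_concat[of 0 n k "\<lambda>j. Z j \<omega>"] that
        by (simp add: lessThan_atLeast0)
      show "\<exists>M. \<forall>m\<ge>M. \<forall>na\<ge>M. norm ((\<Sum>j<m. Z j \<omega>) - (\<Sum>j<na. Z j \<omega>)) < e"
      proof (intro exI allI impI)
        fix m k assume "n \<le> m" "n \<le> k"
        then have "\<bar>\<Sum>j\<in>{n..<m}. Z j \<omega>\<bar> < e/2" "\<bar>\<Sum>j\<in>{n..<k}. Z j \<omega>\<bar> < e/2"
          using n small by (auto intro: less_trans)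
        then show "norm ((\<Sum>j<m. Z j \<omega>) - (\<Sum>j<k. Z j \<omega>)) < e"
          using ps[OF \<open>n \<le> m\<close>] ps[OF \<open>n \<le> k\<close>] by simp
      qed
    qed
    then show "convergent (\<lambda>k. \<Sum>j<k. Z j \<omega>)" by (simp add: Cauchy_convergent_iff)
  qed
qed

end




lemma lipschitz_scaled:
  fixes pe :: "real \<Rightarrow> real"
  assumes Lip: "lipschitz_on L UNIV pe" and a0: "a0 \<noteq> 0"
  shows "lipschitz_on (L / a0^2) UNIV (\<lambda>y. pe (y / a0) / \<bar>a0\<bar>)"
proof -
  have L0: "0 \<le> L" using Lip by (simp add: lipschitz_on_def)
  show ?thesis unfolding lipschitz_on_def
  proof (intro conjI ballI)
    show "0 \<le> L / a0^2" using L0 by simp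
    fix x y :: real
    have "dist (pe (x / a0)) (pe (y / a0)) \<le> L * dist (x/a0) (y/a0)"
      using Lip by (simp add: lipschitz_on_def)
    also have "dist (x/a0) (y/a0) = dist x y / \<bar>a0\<bar>"
      using a0 by (simp add: dist_real_def diff_divide_distrib[symmetric] abs_divide)
    finally have *: "\<bar>pe (x / a0) - pe (y / a0)\<bar> \<le> L * (dist x y / \<bar>a0\<bar>)" by (simp add: dist_real_def)
    have "dist (pe (x / a0) / \<bar>a0\<bar>) (pe (y / a0) / \<bar>a0\<bar>) = \<bar>pe (x / a0) - pe (y / a0)\<bar> / \<bar>a0\<bar>"
      by (simp add: dist_real_def diff_divide_distrib[symmetric] abs_divide)
    also have "\<dots> \<le> L * (dist x y / \<bar>a0\<bar>) / \<bar>a0\<bar>"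
      by (rule divide_right_mono[OF *]) simp
    also have "\<dots> = L / a0^2 * dist x y" using a0 by (simp add: power2_eq_square abs_mult_self_eq field_simps)
    finally show "dist (pe (x / a0) / \<bar>a0\<bar>) (pe (y / a0) / \<bar>a0\<bar>) \<le> L / a0^2 * dist x y" .
  qed
qed

lemma aff1:
  fixes pe :: "real \<Rightarrow> real" and h :: "real \<Rightarrow> ennreal"
  assumes pem[measurable]: "pe \<in> borel_measurable borel" and pe0: "\<And>x. 0 \<le> pe x" and a0: "a0 \<noteq> 0"
    and hm[measurable]: "h \<in> borel_measurable borel"
  shows "(\<integral>\<^sup>+x. h (a0 * x + t) \<partial>density lborel (\<lambda>x. ennreal (pe x)))
       = (\<integral>\<^sup>+y. ennreal (pe ((y - t) / a0) / \<bar>a0\<bar>) * h y \<partial>lborel)"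
proof -
  have "(\<integral>\<^sup>+x. h (a0 * x + t) \<partial>density lborel (\<lambda>x. ennreal (pe x))) = (\<integral>\<^sup>+x. ennreal (pe x) * h (a0 * x + t) \<partial>lborel)"
    by (subst nn_integral_density) auto
  moreover have aff: "(\<integral>\<^sup>+y. ennreal (pe ((y - t) / a0) / \<bar>a0\<bar>) * h y \<partial>lborel)
      = ennreal \<bar>a0\<bar> * (\<integral>\<^sup>+x. ennreal (pe ((t + a0 * x - t) / a0) / \<bar>a0\<bar>) * h (t + a0 * x) \<partial>lborel)"
    by (rule nn_integral_real_affine) (auto simp: a0)
  moreover have mor: "(\<lambda>x. ennreal (pe ((t + a0 * x - t) / a0) / \<bar>a0\<bar>) * h (t + a0 * x)) = (\<lambda>x. ennreal (1 / \<bar>a0\<bar>) * (ennreal (pe x) * h (a0 * x + t)))"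
  proof (rule ext)
    fix x
    have "ennreal (pe x / \<bar>a0\<bar>) = ennreal (1 / \<bar>a0\<bar>) * ennreal (pe x)"
      using pe0[of x] by (subst ennreal_mult[symmetric]) auto
    then show "ennreal (pe ((t + a0 * x - t) / a0) / \<bar>a0\<bar>) * h (t + a0 * x) = ennreal (1 / \<bar>a0\<bar>) * (ennreal (pe x) * h (a0 * x + t))"
      using a0 by (simp add: add.commute mult.assoc)
  qed
  moreover have c: "(\<integral>\<^sup>+x. ennreal (1 / \<bar>a0\<bar>) * (ennreal (pe x) * h (a0 * x + t)) \<partial>lborel) = ennreal (1 / \<bar>a0\<bar>) * (\<integral>\<^sup>+x. ennreal (pe x) * h (a0 * x + t) \<partial>lborel)"
    by (rule nn_integral_cmult) auto
  moreover have one: "ennreal \<bar>a0\<bar> * ennreal (1 / \<bar>a0\<bar>) = 1"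
    using a0 by (simp add: ennreal_mult[symmetric])
  ultimately show ?thesis by (simp only: mult.assoc[symmetric] mult_1)
qed

context prob_space begin

lemma dens1:
  fixes e W :: "'a \<Rightarrow> real" and pe :: "real \<Rightarrow> real"
  assumes e: "distributed M lborel e (\<lambda>x. ennreal (pe x))" and pe0: "\<And>x. 0 \<le> pe x"
    and peB: "\<And>x. pe x \<le> B" and Lip: "lipschitz_on L UNIV pe" and a0: "a0 \<noteq> 0"
    and iv: "indep_var borel e borel W"
  shows "\<exists>p. (\<forall>x. 0 \<le> p x) \<and> distributed M lborel (\<lambda>\<omega>. a0 * e \<omega> + W \<omega>) (\<lambda>x. ennreal (p x))
            \<and> lipschitz_on (L / a0^2) UNIV p \<and> (\<forall>x. p x \<le> B / \<bar>a0\<bar>)"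
proof -
  have em[measurable]: "e \<in> borel_measurable M" using indep_var_rv1[OF iv] by simp
  have Wm[measurable]: "W \<in> borel_measurable M" using indep_var_rv2[OF iv] by simp
  have pem[measurable]: "pe \<in> borel_measurable borel"
    using lipschitz_on_continuous_on[OF Lip] by (rule borel_measurable_continuous_onI)
  define N where "N = distr M borel W"
  interpret N: prob_space N unfolding N_def by (rule prob_space_distr) simp
  have sN[measurable_cong]: "sets N = sets borel" unfolding N_def by simp
  define f1 where "f1 y = pe (y / a0) / \<bar>a0\<bar>" for y
  have f1L: "lipschitz_on (L / a0^2) UNIV f1" unfolding f1_def by (rule lipschitz_scaled[OF Lip a0])
  have f1m[measurable]: "f1 \<in> borel_measurable borel"
    using lipschitz_on_continuous_on[OF f1L] by (rule borel_measurable_continuous_onI)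
  have f10: "0 \<le> f1 y" for y unfolding f1_def using pe0 by simp
  have f1B: "f1 y \<le> B / \<bar>a0\<bar>" for y unfolding f1_def using peB by (simp add: divide_right_mono)
  define p where "p x = (\<integral>w. f1 (x - w) \<partial>N)" for x
  have intN: "integrable N (\<lambda>w. f1 (x - w))" for x
    by (rule N.integrable_const_bound[where B="B / \<bar>a0\<bar>"]) (use f10 f1B in auto)
  have pe_nn: "ennreal (p x) = (\<integral>\<^sup>+w. ennreal (f1 (x - w)) \<partial>N)" for x
    unfolding p_def by (rule nn_integral_eq_integral[symmetric]) (use intN f10 in auto)
  have pL: "lipschitz_on (L / a0^2) UNIV p" unfolding lipschitz_on_def
  proof (intro conjI ballI)
    show "0 \<le> L / a0^2" using f1L by (simp add: lipschitz_on_def)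
    fix x y :: real
    have "dist (p x) (p y) = norm (\<integral>w. f1 (x - w) - f1 (y - w) \<partial>N)"
      unfolding p_def dist_real_def using intN by simp
    also have "\<dots> \<le> (\<integral>w. norm (f1 (x - w) - f1 (y - w)) \<partial>N)"
      by (rule integral_norm_bound)
    also have "\<dots> \<le> (\<integral>w. L / a0^2 * dist x y \<partial>N)"
    proof (rule integral_mono)
      show "integrable N (\<lambda>w. norm (f1 (x - w) - f1 (y - w)))" using intN by auto
      show "integrable N (\<lambda>w. L / a0^2 * dist x y)" by simp
      fix w
      have "dist (f1 (x - w)) (f1 (y - w)) \<le> L / a0^2 * dist (x - w) (y - w)"
        using f1L by (simp add: lipschitz_on_def)
      then show "norm (f1 (x - w) - f1 (y - w)) \<le> L / a0^2 * dist x y"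
        by (simp add: dist_real_def)
    qed
    also have "\<dots> = L / a0^2 * dist x y" by (simp add: N.prob_space)
    finally show "dist (p x) (p y) \<le> L / a0^2 * dist x y" .
  qed
  have pm[measurable]: "p \<in> borel_measurable borel"
    using lipschitz_on_continuous_on[OF pL] by (rule borel_measurable_continuous_onI)
  have p0: "0 \<le> p x" for x unfolding p_def using f10 by simp
  have pB: "p x \<le> B / \<bar>a0\<bar>" for x
  proof -
    have "p x \<le> (\<integral>w. B / \<bar>a0\<bar> \<partial>N)" unfolding p_def
      by (rule integral_mono) (use intN f1B in auto)
    then show ?thesis by (simp add: N.prob_space)
  qed
  have D1: "distr M borel e = density lborel (\<lambda>x. ennreal (pe x))"
  proof -
    have "distr M borel e = distr M lborel e" by (rule distr_cong) auto
    also have "\<dots> = density lborel (\<lambda>x. ennreal (pe x))" using e by (simp add: distributed_def)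
    finally show ?thesis .
  qed
  interpret D1: prob_space "distr M borel e" by (rule prob_space_distr) simp
  interpret P: pair_sigma_finite "distr M borel e" N ..
  interpret P2: pair_sigma_finite lborel N ..
  have joint: "distr M (borel \<Otimes>\<^sub>M borel) (\<lambda>\<omega>. (e \<omega>, W \<omega>)) = distr M borel e \<Otimes>\<^sub>M N"
    using iv unfolding indep_var_distribution_eq N_def by simp
  have main: "distr M lborel (\<lambda>\<omega>. a0 * e \<omega> + W \<omega>) = density lborel (\<lambda>x. ennreal (p x))"
  proof (rule measure_eqI)
    show "sets (distr M lborel (\<lambda>\<omega>. a0 * e \<omega> + W \<omega>)) = sets (density lborel (\<lambda>x. ennreal (p x)))" by simp
    fix A assume "A \<in> sets (distr M lborel (\<lambda>\<omega>. a0 * e \<omega> + W \<omega>))"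
    then have A[measurable]: "A \<in> sets borel" by simp
    have "emeasure (distr M lborel (\<lambda>\<omega>. a0 * e \<omega> + W \<omega>)) A = (\<integral>\<^sup>+\<omega>. indicator A (a0 * e \<omega> + W \<omega>) \<partial>M)"
      by (subst emeasure_distr) (auto simp: nn_integral_indicator[symmetric] simp del: nn_integral_indicator
           intro!: nn_integral_cong split: split_indicator)
    also have "\<dots> = (\<integral>\<^sup>+z. indicator A (a0 * fst z + snd z) \<partial>distr M (borel \<Otimes>\<^sub>M borel) (\<lambda>\<omega>. (e \<omega>, W \<omega>)))"
      by (subst nn_integral_distr) auto
    also have "\<dots> = (\<integral>\<^sup>+z. indicator A (a0 * fst z + snd z) \<partial>(distr M borel e \<Otimes>\<^sub>M N))"
      by (simp add: joint)
    also have "\<dots> = (\<integral>\<^sup>+w. \<integral>\<^sup>+x. indicator A (a0 * x + w) \<partial>distr M borel e \<partial>N)"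
      by (subst P.nn_integral_snd[symmetric]) auto
    also have "\<dots> = (\<integral>\<^sup>+w. \<integral>\<^sup>+y. ennreal (f1 (y - w)) * indicator A y \<partial>lborel \<partial>N)"
    proof (rule nn_integral_cong)
      fix w
      have "(\<integral>\<^sup>+x. indicator A (a0 * x + w) \<partial>distr M borel e) = (\<integral>\<^sup>+x. ennreal (pe x) * indicator A (a0 * x + w) \<partial>lborel)"
        unfolding D1 by (subst nn_integral_density) auto
      moreover have aff: "(\<integral>\<^sup>+y. ennreal (f1 (y - w)) * indicator A y \<partial>lborel)
          = ennreal \<bar>a0\<bar> * (\<integral>\<^sup>+x. ennreal (f1 (w + a0 * x - w)) * indicator A (w + a0 * x) \<partial>lborel)"
        by (rule nn_integral_real_affine) (auto simp: a0)
      moreover have mor: "(\<lambda>x. ennreal (f1 (w + a0 * x - w)) * indicator A (w + a0 * x)) = (\<lambda>x. ennreal (1 / \<bar>a0\<bar>) * (ennreal (pe x) * indicator A (a0 * x + w)))"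
        using a0 pe0 by (auto simp: f1_def ennreal_mult'[symmetric] add.commute split: split_indicator)
      moreover have c: "(\<integral>\<^sup>+x. ennreal (1 / \<bar>a0\<bar>) * (ennreal (pe x) * indicator A (a0 * x + w)) \<partial>lborel) = ennreal (1 / \<bar>a0\<bar>) * (\<integral>\<^sup>+x. ennreal (pe x) * indicator A (a0 * x + w) \<partial>lborel)"
        by (rule nn_integral_cmult) auto
      moreover have one: "ennreal \<bar>a0\<bar> * ennreal (1 / \<bar>a0\<bar>) = 1"
        using a0 by (simp add: ennreal_mult[symmetric])
      ultimately show "(\<integral>\<^sup>+x. indicator A (a0 * x + w) \<partial>distr M borel e) = (\<integral>\<^sup>+y. ennreal (f1 (y - w)) * indicator A y \<partial>lborel)"
        by (simp only: mult.assoc[symmetric] mult_1)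
    qed
    also have "\<dots> = (\<integral>\<^sup>+y. \<integral>\<^sup>+w. ennreal (f1 (y - w)) * indicator A y \<partial>N \<partial>lborel)"
      by (rule P2.Fubini') auto
    also have "\<dots> = (\<integral>\<^sup>+y. ennreal (p y) * indicator A y \<partial>lborel)"
      by (intro nn_integral_cong) (simp add: pe_nn nn_integral_multc)
    also have "\<dots> = emeasure (density lborel (\<lambda>x. ennreal (p x))) A"
      by (simp add: emeasure_density)
    finally show "emeasure (distr M lborel (\<lambda>\<omega>. a0 * e \<omega> + W \<omega>)) A = emeasure (density lborel (\<lambda>x. ennreal (p x))) A" .
  qed
  show ?thesis
    by (intro exI[of _ p] conjI allI p0 pL pB) (simp add: distributed_def main)
qed
lemma dens2:
  fixes e1 e2 U V :: "'a \<Rightarrow> real" and pe :: "real \<Rightarrow> real"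
  assumes e1: "distributed M lborel e1 (\<lambda>x. ennreal (pe x))"
    and e2: "distributed M lborel e2 (\<lambda>x. ennreal (pe x))"
    and pe0: "\<And>x. 0 \<le> pe x" and peB: "\<And>x. pe x \<le> B"
    and pem[measurable]: "pe \<in> borel_measurable borel" and a0: "a0 \<noteq> 0"
    and Um[measurable]: "U \<in> borel_measurable M" and Vm[measurable]: "V \<in> borel_measurable M"
    and iv1: "distr M (borel \<Otimes>\<^sub>M (borel \<Otimes>\<^sub>M (borel \<Otimes>\<^sub>M borel))) (\<lambda>\<omega>. (e1 \<omega>, e2 \<omega>, U \<omega>, V \<omega>))
       = distr M borel e1 \<Otimes>\<^sub>M distr M (borel \<Otimes>\<^sub>M (borel \<Otimes>\<^sub>M borel)) (\<lambda>\<omega>. (e2 \<omega>, U \<omega>, V \<omega>))"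
    and iv2: "distr M (borel \<Otimes>\<^sub>M (borel \<Otimes>\<^sub>M borel)) (\<lambda>\<omega>. (e2 \<omega>, U \<omega>, V \<omega>))
       = distr M borel e2 \<Otimes>\<^sub>M distr M (borel \<Otimes>\<^sub>M borel) (\<lambda>\<omega>. (U \<omega>, V \<omega>))"
  shows "\<exists>q. (\<forall>z. 0 \<le> q z) \<and>
     distributed M (lborel \<Otimes>\<^sub>M lborel) (\<lambda>\<omega>. (a0 * e1 \<omega> + c * e2 \<omega> + U \<omega>, a0 * e2 \<omega> + V \<omega>)) (\<lambda>z. ennreal (q z))
     \<and> (\<forall>z. q z \<le> (B / \<bar>a0\<bar>)^2)"
proof -
  have e1m[measurable]: "e1 \<in> borel_measurable M" using e1 by (simp add: distributed_def)
  have e2m[measurable]: "e2 \<in> borel_measurable M" using e2 by (simp add: distributed_def)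
  define N where "N = distr M (borel \<Otimes>\<^sub>M borel) (\<lambda>\<omega>. (U \<omega>, V \<omega>))"
  interpret N: prob_space N unfolding N_def by (rule prob_space_distr) simp
  have sN[measurable_cong]: "sets N = sets (borel \<Otimes>\<^sub>M borel)" unfolding N_def by simp
  define D where "D = density lborel (\<lambda>x. ennreal (pe x))"
  have D1: "distr M borel e1 = D"
  proof -
    have "distr M borel e1 = distr M lborel e1" by (rule distr_cong) auto
    also have "\<dots> = D" using e1 by (simp add: distributed_def D_def)
    finally show ?thesis .
  qed
  have D2: "distr M borel e2 = D"
  proof -
    have "distr M borel e2 = distr M lborel e2" by (rule distr_cong) auto
    also have "\<dots> = D" using e2 by (simp add: distributed_def D_def)
    finally show ?thesis .
  qed
  interpret D: prob_space D unfolding D1[symmetric] by (rule prob_space_distr) simp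
  have sD[measurable_cong]: "sets D = sets borel" unfolding D_def by simp
  interpret DN: pair_sigma_finite D N ..
  interpret DDN: pair_sigma_finite D "D \<Otimes>\<^sub>M N" ..
  interpret LLN: pair_sigma_finite "lborel \<Otimes>\<^sub>M lborel" N ..
  have j2: "distr M (borel \<Otimes>\<^sub>M (borel \<Otimes>\<^sub>M borel)) (\<lambda>\<omega>. (e2 \<omega>, U \<omega>, V \<omega>)) = D \<Otimes>\<^sub>M N"
    using iv2 unfolding N_def D2 by simp
  have joint: "distr M (borel \<Otimes>\<^sub>M (borel \<Otimes>\<^sub>M (borel \<Otimes>\<^sub>M borel))) (\<lambda>\<omega>. (e1 \<omega>, e2 \<omega>, U \<omega>, V \<omega>)) = D \<Otimes>\<^sub>M (D \<Otimes>\<^sub>M N)"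
    using iv1 unfolding D1 j2 by simp
  define f1 where "f1 y = pe (y / a0) / \<bar>a0\<bar>" for y
  have f1m[measurable]: "f1 \<in> borel_measurable borel" unfolding f1_def by measurable
  have f10: "0 \<le> f1 y" for y unfolding f1_def using pe0 by simp
  have f1B: "f1 y \<le> B / \<bar>a0\<bar>" for y unfolding f1_def using peB by (simp add: divide_right_mono)
  define \<phi> where "\<phi> y z s = f1 (z - snd s) * f1 (y - c * (z - snd s) / a0 - fst s)" for y z and s :: "real \<times> real"
  have \<phi>m[measurable]: "(\<lambda>(t, s). \<phi> (fst t) (snd t) s) \<in> borel_measurable ((borel \<Otimes>\<^sub>M borel) \<Otimes>\<^sub>M (borel \<Otimes>\<^sub>M borel))"
    unfolding \<phi>_def by measurable
  have \<phi>s: "(\<lambda>s. \<phi> y z s) \<in> borel_measurable N" for y z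
    unfolding \<phi>_def by measurable
  have \<phi>0: "0 \<le> \<phi> y z s" for y z s unfolding \<phi>_def using f10 by simp
  have \<phi>B: "\<phi> y z s \<le> (B / \<bar>a0\<bar>)^2" for y z s unfolding \<phi>_def power2_eq_square
    using f10 f1B pe0[of 0] peB[of 0] by (intro mult_mono) auto
  define Q where "Q t = (\<integral>\<^sup>+s. ennreal (\<phi> (fst t) (snd t) s) \<partial>N)" for t
  have Qm[measurable]: "Q \<in> borel_measurable (lborel \<Otimes>\<^sub>M lborel)"
    unfolding Q_def by measurable
  have QB: "Q t \<le> ennreal ((B / \<bar>a0\<bar>)^2)" for t
  proof -
    have "Q t \<le> (\<integral>\<^sup>+s. ennreal ((B / \<bar>a0\<bar>)^2) \<partial>N)" unfolding Q_def
      by (intro nn_integral_mono) (simp add: \<phi>B)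
    then show ?thesis by (simp add: N.emeasure_space_1)
  qed
  define q where "q t = enn2real (Q t)" for t
  have qQ: "ennreal (q t) = Q t" for t unfolding q_def using QB[of t]
    by (intro ennreal_enn2real) (auto simp: top_unique dest: le_less_trans[OF _ ennreal_less_top])
  have main: "distr M (lborel \<Otimes>\<^sub>M lborel) (\<lambda>\<omega>. (a0 * e1 \<omega> + c * e2 \<omega> + U \<omega>, a0 * e2 \<omega> + V \<omega>)) = density (lborel \<Otimes>\<^sub>M lborel) Q"
  proof (rule measure_eqI)
    show "sets (distr M (lborel \<Otimes>\<^sub>M lborel) (\<lambda>\<omega>. (a0 * e1 \<omega> + c * e2 \<omega> + U \<omega>, a0 * e2 \<omega> + V \<omega>))) = sets (density (lborel \<Otimes>\<^sub>M lborel) Q)" by simp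
    fix C assume "C \<in> sets (distr M (lborel \<Otimes>\<^sub>M lborel) (\<lambda>\<omega>. (a0 * e1 \<omega> + c * e2 \<omega> + U \<omega>, a0 * e2 \<omega> + V \<omega>)))"
    then have C[measurable]: "C \<in> sets (borel \<Otimes>\<^sub>M borel)" by simp
    have "emeasure (distr M (lborel \<Otimes>\<^sub>M lborel) (\<lambda>\<omega>. (a0 * e1 \<omega> + c * e2 \<omega> + U \<omega>, a0 * e2 \<omega> + V \<omega>))) C
        = (\<integral>\<^sup>+\<omega>. indicator C (a0 * e1 \<omega> + c * e2 \<omega> + U \<omega>, a0 * e2 \<omega> + V \<omega>) \<partial>M)"
      by (subst emeasure_distr) (auto simp: nn_integral_indicator[symmetric] simp del: nn_integral_indicator
           intro!: nn_integral_cong split: split_indicator)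
    also have "\<dots> = (\<integral>\<^sup>+t. indicator C (a0 * fst t + c * fst (snd t) + fst (snd (snd t)), a0 * fst (snd t) + snd (snd (snd t)))
          \<partial>distr M (borel \<Otimes>\<^sub>M (borel \<Otimes>\<^sub>M (borel \<Otimes>\<^sub>M borel))) (\<lambda>\<omega>. (e1 \<omega>, e2 \<omega>, U \<omega>, V \<omega>)))"
      by (subst nn_integral_distr) auto
    also have "\<dots> = (\<integral>\<^sup>+t. indicator C (a0 * fst t + c * fst (snd t) + fst (snd (snd t)), a0 * fst (snd t) + snd (snd (snd t)))
          \<partial>(D \<Otimes>\<^sub>M (D \<Otimes>\<^sub>M N)))"
      by (simp add: joint)
    also have "\<dots> = (\<integral>\<^sup>+r. \<integral>\<^sup>+x. indicator C (a0 * x + c * fst r + fst (snd r), a0 * fst r + snd (snd r)) \<partial>D \<partial>(D \<Otimes>\<^sub>M N))"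
      by (subst DDN.nn_integral_snd[symmetric]) auto
    also have "\<dots> = (\<integral>\<^sup>+r. \<integral>\<^sup>+y. ennreal (f1 (y - (c * fst r + fst (snd r)))) * indicator C (y, a0 * fst r + snd (snd r)) \<partial>lborel \<partial>(D \<Otimes>\<^sub>M N))"
      unfolding D_def f1_def
      by (intro nn_integral_cong, subst aff1[symmetric]) (auto simp: pe0 a0 add.assoc)
    also have "\<dots> = (\<integral>\<^sup>+s. \<integral>\<^sup>+w. \<integral>\<^sup>+y. ennreal (f1 (y - (c * w + fst s))) * indicator C (y, a0 * w + snd s) \<partial>lborel \<partial>D \<partial>N)"
      by (subst DN.nn_integral_snd[symmetric]) auto
    also have "\<dots> = (\<integral>\<^sup>+s. \<integral>\<^sup>+z. ennreal (f1 (z - snd s)) * (\<integral>\<^sup>+y. ennreal (f1 (y - c * (z - snd s) / a0 - fst s)) * indicator C (y, z) \<partial>lborel) \<partial>lborel \<partial>N)"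
    proof (rule nn_integral_cong)
      fix s :: "real \<times> real"
      have "(\<integral>\<^sup>+w. (\<lambda>z. \<integral>\<^sup>+y. ennreal (f1 (y - c * (z - snd s) / a0 - fst s)) * indicator C (y, z) \<partial>lborel) (a0 * w + snd s) \<partial>D)
         = (\<integral>\<^sup>+z. ennreal (f1 (z - snd s)) * (\<integral>\<^sup>+y. ennreal (f1 (y - c * (z - snd s) / a0 - fst s)) * indicator C (y, z) \<partial>lborel) \<partial>lborel)"
        unfolding D_def f1_def by (rule aff1) (auto simp: pe0 a0)
      moreover have "(\<lambda>w. (\<lambda>z. \<integral>\<^sup>+y. ennreal (f1 (y - c * (z - snd s) / a0 - fst s)) * indicator C (y, z) \<partial>lborel) (a0 * w + snd s))
          = (\<lambda>w. \<integral>\<^sup>+y. ennreal (f1 (y - (c * w + fst s))) * indicator C (y, a0 * w + snd s) \<partial>lborel)"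
        using a0 by (simp add: diff_diff_add)
      ultimately show "(\<integral>\<^sup>+w. \<integral>\<^sup>+y. ennreal (f1 (y - (c * w + fst s))) * indicator C (y, a0 * w + snd s) \<partial>lborel \<partial>D)
         = (\<integral>\<^sup>+z. ennreal (f1 (z - snd s)) * (\<integral>\<^sup>+y. ennreal (f1 (y - c * (z - snd s) / a0 - fst s)) * indicator C (y, z) \<partial>lborel) \<partial>lborel)"
        by simp
    qed
    also have "\<dots> = (\<integral>\<^sup>+s. \<integral>\<^sup>+z. \<integral>\<^sup>+y. ennreal (\<phi> y z s) * indicator C (y, z) \<partial>lborel \<partial>lborel \<partial>N)"
      by (intro nn_integral_cong, subst nn_integral_cmult[symmetric])
         (auto simp: \<phi>_def ennreal_mult f10 mult.assoc)
    also have "\<dots> = (\<integral>\<^sup>+s. \<integral>\<^sup>+t. ennreal (\<phi> (fst t) (snd t) s) * indicator C t \<partial>(lborel \<Otimes>\<^sub>M lborel) \<partial>N)"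
      by (intro nn_integral_cong, subst lborel_pair.nn_integral_snd[symmetric]) auto
    also have "\<dots> = (\<integral>\<^sup>+t. \<integral>\<^sup>+s. ennreal (\<phi> (fst t) (snd t) s) * indicator C t \<partial>N \<partial>(lborel \<Otimes>\<^sub>M lborel))"
      by (rule LLN.Fubini') auto
    also have "\<dots> = (\<integral>\<^sup>+t. Q t * indicator C t \<partial>(lborel \<Otimes>\<^sub>M lborel))"
      unfolding Q_def by (intro nn_integral_cong nn_integral_multc) (use \<phi>s in auto)
    also have "\<dots> = emeasure (density (lborel \<Otimes>\<^sub>M lborel) Q) C"
      by (simp add: emeasure_density)
    finally show "emeasure (distr M (lborel \<Otimes>\<^sub>M lborel) (\<lambda>\<omega>. (a0 * e1 \<omega> + c * e2 \<omega> + U \<omega>, a0 * e2 \<omega> + V \<omega>))) C = emeasure (density (lborel \<Otimes>\<^sub>M lborel) Q) C" .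
  qed
  have qm: "q \<in> borel_measurable (lborel \<Otimes>\<^sub>M lborel)" unfolding q_def by measurable
  have q0: "0 \<le> q t" for t unfolding q_def by simp
  have qB: "q t \<le> (B / \<bar>a0\<bar>)^2" for t
    using QB[of t] qQ[of t] by (simp add: ennreal_le_iff[symmetric])
  show ?thesis
    by (intro exI[of _ q] conjI allI q0 qB) (simp add: distributed_def main qQ qm)
qed

lemma density_bounded:
  fixes e :: "'a \<Rightarrow> real" and pe :: "real \<Rightarrow> real"
  assumes e: "distributed M lborel e (\<lambda>x. ennreal (pe x))" and pe0: "\<And>x. 0 \<le> pe x"
    and Lip: "lipschitz_on L UNIV pe"
  shows "\<exists>B. \<forall>x. pe x \<le> B"
proof -
  define L' where "L' = L + 1"
  have L0: "0 \<le> L" using Lip by (simp add: lipschitz_on_def)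
  have L'0: "0 < L'" unfolding L'_def using L0 by simp
  have Lip': "\<bar>pe x - pe y\<bar> \<le> L' * \<bar>x - y\<bar>" for x y
  proof -
    have "\<bar>pe x - pe y\<bar> \<le> L * \<bar>x - y\<bar>" using Lip by (simp add: lipschitz_on_def dist_real_def)
    also have "\<dots> \<le> L' * \<bar>x - y\<bar>" unfolding L'_def by (simp add: mult_right_mono)
    finally show ?thesis .
  qed
  have pem[measurable]: "pe \<in> borel_measurable borel"
    using lipschitz_on_continuous_on[OF Lip] by (rule borel_measurable_continuous_onI)
  interpret D: prob_space "density lborel (\<lambda>x. ennreal (pe x))"
    using e prob_space_distr[of e lborel] by (simp add: distributed_def)
  have "pe x0 \<le> 1 + 2 * L'" for x0
  proof -
    define c where "c = pe x0"
    have c0: "0 \<le> c" unfolding c_def by (rule pe0)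
    define I where "I = {x0 - c / (2 * L') .. x0 + c / (2 * L')}"
    have lo: "c / 2 \<le> pe y" if "y \<in> I" for y
    proof -
      have "\<bar>y - x0\<bar> \<le> c / (2 * L')" using that unfolding I_def by auto
      then have "L' * \<bar>y - x0\<bar> \<le> L' * (c / (2 * L'))" using L'0 by (intro mult_left_mono) auto
      also have "\<dots> = c / 2" using L'0 by (simp add: field_simps)
      finally show ?thesis using Lip'[of x0 y] unfolding c_def by (simp add: abs_minus_commute)
    qed
    have "ennreal (c / 2 * (c / L')) = (\<integral>\<^sup>+x. ennreal (c / 2) * indicator I x \<partial>lborel)"
    proof -
      have "emeasure lborel I = ennreal (c / L')"
        unfolding I_def using c0 L'0 by (simp add: field_simps)
      moreover have "(\<integral>\<^sup>+x. ennreal (c / 2) * indicator I x \<partial>lborel) = ennreal (c / 2) * emeasure lborel I"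
        by (rule nn_integral_cmult_indicator) (simp add: I_def)
      moreover have "ennreal (c / 2 * (c / L')) = ennreal (c / 2) * ennreal (c / L')"
        using c0 L'0 by (intro ennreal_mult) auto
      ultimately show ?thesis by simp
    qed
    also have "\<dots> \<le> (\<integral>\<^sup>+x. ennreal (pe x) * indicator I x \<partial>lborel)"
    proof (intro nn_integral_mono)
      fix x show "ennreal (c / 2) * indicator I x \<le> ennreal (pe x) * indicator I x"
        using lo[of x] by (cases "x \<in> I") (auto intro: ennreal_leI)
    qed
    also have "\<dots> = emeasure (density lborel (\<lambda>x. ennreal (pe x))) I"
      by (rule emeasure_density[symmetric]) (auto simp: I_def)
    also have "\<dots> \<le> 1" by (rule D.emeasure_le_1)
    finally have "c / 2 * (c / L') \<le> 1" by (simp only: ennreal_le_1)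
    moreover have "c / 2 * (c / L') = (c * c) / (2 * L')" by simp
    ultimately have "c * c \<le> 2 * L'" using L'0 by (simp add: pos_divide_le_eq)
    moreover have "(c - 1/2) * (c - 1/2) = c * c - c + 1/4" by (simp add: algebra_simps)
    moreover have "0 \<le> (c - 1/2) * (c - 1/2)" by simp
    ultimately show ?thesis unfolding c_def by linarith
  qed
  then show ?thesis by blast
qed

end




context prob_space begin

lemma block_distr:
  assumes ind: "indep_vars (\<lambda>_. borel) X I" and AB: "A \<inter> B = {}" "A \<subseteq> I" "B \<subseteq> I"
    and f[measurable]: "f \<in> measurable (PiM A (\<lambda>_. borel)) N1" and g[measurable]: "g \<in> measurable (PiM B (\<lambda>_. borel)) N2"
  shows "distr M (N1 \<Otimes>\<^sub>M N2) (\<lambda>\<omega>. (f (\<lambda>i\<in>A. X i \<omega>), g (\<lambda>i\<in>B. X i \<omega>)))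
       = distr M N1 (\<lambda>\<omega>. f (\<lambda>i\<in>A. X i \<omega>)) \<Otimes>\<^sub>M distr M N2 (\<lambda>\<omega>. g (\<lambda>i\<in>B. X i \<omega>))"
proof -
  have iv: "indep_var (PiM A (\<lambda>_. borel)) (\<lambda>\<omega>. \<lambda>i\<in>A. X i \<omega>) (PiM B (\<lambda>_. borel)) (\<lambda>\<omega>. \<lambda>i\<in>B. X i \<omega>)"
    by (rule indep_var_restrict[OF ind AB])
  have rA[measurable]: "(\<lambda>\<omega>. \<lambda>i\<in>A. X i \<omega>) \<in> measurable M (PiM A (\<lambda>_. borel))" using indep_var_rv1[OF iv] .
  have rB[measurable]: "(\<lambda>\<omega>. \<lambda>i\<in>B. X i \<omega>) \<in> measurable M (PiM B (\<lambda>_. borel))" using indep_var_rv2[OF iv] .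
  have j: "distr M (PiM A (\<lambda>_. borel) \<Otimes>\<^sub>M PiM B (\<lambda>_. borel)) (\<lambda>\<omega>. (\<lambda>i\<in>A. X i \<omega>, \<lambda>i\<in>B. X i \<omega>))
     = distr M (PiM A (\<lambda>_. borel)) (\<lambda>\<omega>. \<lambda>i\<in>A. X i \<omega>) \<Otimes>\<^sub>M distr M (PiM B (\<lambda>_. borel)) (\<lambda>\<omega>. \<lambda>i\<in>B. X i \<omega>)"
    using iv unfolding indep_var_distribution_eq by simp
  interpret PB0: prob_space "distr M (PiM B (\<lambda>_. borel)) (\<lambda>\<omega>. \<lambda>i\<in>B. X i \<omega>)"
    by (rule prob_space_distr) simp
  interpret PB: prob_space "distr (distr M (PiM B (\<lambda>_. borel)) (\<lambda>\<omega>. \<lambda>i\<in>B. X i \<omega>)) N2 g"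
    by (rule PB0.prob_space_distr) simp
  have "distr M (N1 \<Otimes>\<^sub>M N2) (\<lambda>\<omega>. (f (\<lambda>i\<in>A. X i \<omega>), g (\<lambda>i\<in>B. X i \<omega>)))
      = distr (distr M (PiM A (\<lambda>_. borel) \<Otimes>\<^sub>M PiM B (\<lambda>_. borel)) (\<lambda>\<omega>. (\<lambda>i\<in>A. X i \<omega>, \<lambda>i\<in>B. X i \<omega>))) (N1 \<Otimes>\<^sub>M N2) (\<lambda>(x, y). (f x, g y))"
    by (subst distr_distr) (auto simp: comp_def)
  also have "\<dots> = distr (distr M (PiM A (\<lambda>_. borel)) (\<lambda>\<omega>. \<lambda>i\<in>A. X i \<omega>)) N1 f \<Otimes>\<^sub>M distr (distr M (PiM B (\<lambda>_. borel)) (\<lambda>\<omega>. \<lambda>i\<in>B. X i \<omega>)) N2 g"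
    unfolding j by (rule pair_measure_distr[symmetric]) (auto intro: PB.sigma_finite_measure)
  also have "\<dots> = distr M N1 (\<lambda>\<omega>. f (\<lambda>i\<in>A. X i \<omega>)) \<Otimes>\<^sub>M distr M N2 (\<lambda>\<omega>. g (\<lambda>i\<in>B. X i \<omega>))"
    by (simp add: distr_distr comp_def)
  finally show ?thesis .
qed

lemma distributed_AE_cong:
  assumes "distributed M N X f" "AE \<omega> in M. X \<omega> = Y \<omega>" "Y \<in> measurable M N"
  shows "distributed M N Y f"
proof -
  have ae: "AE \<omega> in M. Y \<omega> = X \<omega>" using assms(2) by auto
  have "distr M N Y = distr M N X"
    by (rule distr_cong_AE[OF refl refl ae]) (use assms in \<open>auto simp: distributed_def\<close>)
  then show ?thesis using assms by (simp add: distributed_def)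
qed

end

lemma cube_finite: "finite (cube m :: (int ^ 'd::finite) set)"
proof -
  have "(cube m :: (int ^ 'd) set) \<subseteq> (\<lambda>f. vec_lambda f) ` (PiE UNIV (\<lambda>_. {0..int m - 1}))"
  proof (rule subsetI)
    fix k :: "int ^ 'd" assume "k \<in> cube m"
    then have "(\<lambda>\<tau>. k $ \<tau>) \<in> PiE UNIV (\<lambda>_. {0..int m - 1})" unfolding cube_def by auto
    moreover have "k = vec_lambda (\<lambda>\<tau>. k $ \<tau>)" by simp
    ultimately show "k \<in> (\<lambda>f. vec_lambda f) ` (PiE UNIV (\<lambda>_. {0..int m - 1}))" by (intro image_eqI[of k vec_lambda "vec_nth k"]) auto
  qed
  moreover have "finite ((\<lambda>f. vec_lambda f) ` (PiE UNIV (\<lambda>_. {0..int m - 1})) :: (int ^ 'd) set)"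
    by (intro finite_imageI finite_PiE) auto
  ultimately show ?thesis by (rule finite_subset)
qed

lemma cube_mono: assumes "m \<le> n" shows "cube m \<subseteq> cube n"
proof -
  have "int m \<le> int n" using assms by simp
  then show ?thesis unfolding cube_def by (auto intro: less_le_trans)
qed

lemma cube_0: "cube 0 = {}"
  unfolding cube_def by auto

lemma zero_in_cube: "m \<ge> 1 \<Longrightarrow> 0 \<in> cube m"
  unfolding cube_def by auto

lemma cube_vge: "k \<in> cube m \<Longrightarrow> vge k 0"
  unfolding cube_def vge_def by auto

lemma vge_in_cube:
  fixes k :: "int ^ 'd::finite"
  assumes "vge k 0"
  shows "\<exists>m0. \<forall>m\<ge>m0. k \<in> cube m"
proof -
  define m0 where "m0 = nat (\<Sum>\<tau>\<in>UNIV. k $ \<tau>) + 1"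
  have "k $ \<tau> \<le> (\<Sum>\<tau>\<in>UNIV. k $ \<tau>)" for \<tau>
    using assms unfolding vge_def by (intro member_le_sum) auto
  moreover have "(\<Sum>\<tau>\<in>UNIV. k $ \<tau>) \<le> int m - 1" if "m \<ge> m0" for m
  proof -
    have "(\<Sum>\<tau>\<in>UNIV. k $ \<tau>) \<le> int (nat (\<Sum>\<tau>\<in>UNIV. k $ \<tau>))" by simp
    moreover have "int (nat (\<Sum>\<tau>\<in>UNIV. k $ \<tau>)) + 1 \<le> int m" using that unfolding m0_def by linarith
    ultimately show ?thesis by linarith
  qed
  ultimately have "k \<in> cube m" if "m \<ge> m0" for m
  proof -
    have "0 \<le> k $ \<tau> \<and> k $ \<tau> \<le> int m - 1" for \<tau>
      using assms \<open>\<And>\<tau>. k $ \<tau> \<le> (\<Sum>\<tau>\<in>UNIV. k $ \<tau>)\<close>[of \<tau>] \<open>\<And>m. m0 \<le> m \<Longrightarrow> (\<Sum>\<tau>\<in>UNIV. k $ \<tau>) \<le> int m - 1\<close>[OF that]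
      unfolding vge_def by auto
    then show ?thesis unfolding cube_def by blast
  qed
  then show ?thesis by blast
qed

lemma vge_antisym: "vge k 0 \<Longrightarrow> vge (-k) 0 \<Longrightarrow> k = 0"
  unfolding vge_def by (auto simp: vec_eq_iff intro: antisym)

lemma cube_ind_tendsto:
  fixes k :: "int ^ 'd::finite"
  shows "(\<lambda>m. if k \<in> cube m then x else (0::real)) \<longlonglongrightarrow> (if vge k 0 then x else 0)"
proof (cases "vge k 0")
  case True
  then obtain m0 where "\<forall>m\<ge>m0. k \<in> cube m" using vge_in_cube by blast
  then have "eventually (\<lambda>m. (if k \<in> cube m then x else 0) = x) sequentially"
    by (auto simp: eventually_sequentially)
  then show ?thesis using True by (simp add: tendsto_eventually)
next
  case False
  then have "(\<lambda>m. if k \<in> cube m then x else 0) = (\<lambda>m. 0)" using cube_vge by fastforce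
  then show ?thesis using False by simp
qed





locale lfield = prob_space M for M :: "'a measure" +
  fixes \<epsilon> :: "int ^ 'd::finite \<Rightarrow> 'a \<Rightarrow> real" and a :: "int ^ 'd \<Rightarrow> real"
    and pe :: "real \<Rightarrow> real" and L B :: real
  assumes meas[measurable]: "\<And>i. \<epsilon> i \<in> borel_measurable M"
    and ind: "indep_vars (\<lambda>_. borel) \<epsilon> UNIV"
    and ident: "\<And>i. distr M borel (\<epsilon> i) = distr M borel (\<epsilon> 0)"
    and int1: "integrable M (\<epsilon> 0)" and mz: "expectation (\<epsilon> 0) = 0"
    and int2: "integrable M (\<lambda>\<omega>. (\<epsilon> 0 \<omega>)^2)"
    and summ: "(\<lambda>k. (a k)^2) summable_on {k. vge k 0}"
    and a0: "a 0 \<noteq> 0"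
    and pe0: "\<And>x. 0 \<le> pe x"
    and ped: "distributed M lborel (\<epsilon> 0) (\<lambda>x. ennreal (pe x))"
    and Lip: "lipschitz_on L UNIV pe"
    and peB: "\<And>x. pe x \<le> B"
begin

lemma eps_dist: "distributed M lborel (\<epsilon> j) (\<lambda>x. ennreal (pe x))"
proof -
  have "distr M lborel (\<epsilon> j) = distr M borel (\<epsilon> j)" by (rule distr_cong) auto
  also have "\<dots> = distr M borel (\<epsilon> 0)" by (rule ident)
  also have "\<dots> = distr M lborel (\<epsilon> 0)" by (rule distr_cong) auto
  finally show ?thesis using ped by (simp add: distributed_def)
qed

lemma eps_fun:
  fixes g :: "real \<Rightarrow> real"
  assumes g[measurable]: "g \<in> borel_measurable borel"
  shows "integrable M (\<lambda>\<omega>. g (\<epsilon> j \<omega>)) = integrable M (\<lambda>\<omega>. g (\<epsilon> 0 \<omega>))"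
    and "expectation (\<lambda>\<omega>. g (\<epsilon> j \<omega>)) = expectation (\<lambda>\<omega>. g (\<epsilon> 0 \<omega>))"
proof -
  show "integrable M (\<lambda>\<omega>. g (\<epsilon> j \<omega>)) = integrable M (\<lambda>\<omega>. g (\<epsilon> 0 \<omega>))"
    using integrable_distr_eq[of "\<epsilon> j" M borel g] integrable_distr_eq[of "\<epsilon> 0" M borel g] ident[of j] by simp
  show "expectation (\<lambda>\<omega>. g (\<epsilon> j \<omega>)) = expectation (\<lambda>\<omega>. g (\<epsilon> 0 \<omega>))"
    using integral_distr[of "\<epsilon> j" M borel g] integral_distr[of "\<epsilon> 0" M borel g] ident[of j] by simp
qed

definition "\<sigma>2 = expectation (\<lambda>\<omega>. (\<epsilon> 0 \<omega>)^2)"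

lemma eps_int1: "integrable M (\<epsilon> j)"
  using eps_fun(1)[of "\<lambda>x. x" j] int1 by simp
lemma eps_mz: "expectation (\<epsilon> j) = 0"
  using eps_fun(2)[of "\<lambda>x. x" j] mz by simp
lemma eps_int2: "integrable M (\<lambda>\<omega>. (\<epsilon> j \<omega>)^2)"
  using eps_fun(1)[of "\<lambda>x. x^2" j] int2 by simp
lemma eps_E2: "expectation (\<lambda>\<omega>. (\<epsilon> j \<omega>)^2) = \<sigma>2"
  using eps_fun(2)[of "\<lambda>x. x^2" j] unfolding \<sigma>2_def by simp

lemma indep_family_blocks:
  fixes Z :: "'i \<Rightarrow> 'a \<Rightarrow> real"
  assumes K: "disjoint_family K" and g: "\<And>n. g n \<in> borel_measurable (PiM (K n) (\<lambda>_. borel))"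
    and Z: "\<And>n \<omega>. Z n \<omega> = g n (\<lambda>j\<in>K n. \<epsilon> j \<omega>)"
  shows "indep_vars (\<lambda>_. borel) Z UNIV"
proof -
  have "indep_vars (\<lambda>n. PiM (K n) (\<lambda>_. borel)) (\<lambda>n \<omega>. \<lambda>j\<in>K n. \<epsilon> j \<omega>) UNIV"
    by (rule indep_vars_restrict[OF ind]) (use K in \<open>auto simp: disjoint_family_on_def\<close>)
  then have "indep_vars (\<lambda>_. borel) (\<lambda>n \<omega>. g n (\<lambda>j\<in>K n. \<epsilon> j \<omega>)) UNIV"
    by (rule indep_vars_compose2) (use g in auto)
  moreover have "Z = (\<lambda>n \<omega>. g n (\<lambda>j\<in>K n. \<epsilon> j \<omega>))" by (intro ext) (rule Z)
  ultimately show ?thesis by simp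
qed

lemma lin_indep: "indep_vars (\<lambda>_. borel) (\<lambda>k \<omega>. c k * \<epsilon> (i - k) \<omega>) UNIV"
proof (rule indep_family_blocks[where K="\<lambda>k. {i - k}" and g="\<lambda>k x. c k * x (i - k)"])
  show "disjoint_family (\<lambda>k. {i - k})" by (auto simp: disjoint_family_on_def)
  show "(\<lambda>x. c k * x (i - k)) \<in> borel_measurable (PiM {i - k} (\<lambda>_. borel))" for k
    by (intro borel_measurable_times borel_measurable_const measurable_component_singleton) auto
qed simp

lemma lin_sq:
  assumes F: "finite F"
  shows "integrable M (\<lambda>\<omega>. (\<Sum>k\<in>F. c k * \<epsilon> (i - k) \<omega>)^2)"
    and "expectation (\<lambda>\<omega>. (\<Sum>k\<in>F. c k * \<epsilon> (i - k) \<omega>)^2) = (\<Sum>k\<in>F. (c k)^2) * \<sigma>2"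
proof -
  have "integrable M (\<lambda>\<omega>. (\<Sum>k\<in>F. c k * \<epsilon> (i - k) \<omega>)^2) \<and>
      expectation (\<lambda>\<omega>. (\<Sum>k\<in>F. c k * \<epsilon> (i - k) \<omega>)^2) = (\<Sum>k\<in>F. expectation (\<lambda>\<omega>. (c k * \<epsilon> (i - k) \<omega>)^2))"
    by (rule indep_sum_sq[OF lin_indep F]) (auto simp: eps_int1 eps_mz eps_int2 power_mult_distrib)
  moreover have "expectation (\<lambda>\<omega>. (c k * \<epsilon> (i - k) \<omega>)^2) = (c k)^2 * \<sigma>2" for k
    by (simp add: power_mult_distrib eps_E2)
  ultimately show "integrable M (\<lambda>\<omega>. (\<Sum>k\<in>F. c k * \<epsilon> (i - k) \<omega>)^2)"
    "expectation (\<lambda>\<omega>. (\<Sum>k\<in>F. c k * \<epsilon> (i - k) \<omega>)^2) = (\<Sum>k\<in>F. (c k)^2) * \<sigma>2"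
    by (auto simp: sum_distrib_right)
qed

definition "shell n = cube (Suc n) - cube n"

lemma shell_disj: "disjoint_family shell"
proof -
  have "shell n \<inter> shell n' = {}" if "n < n'" for n n'
  proof -
    have "shell n \<subseteq> cube n'" unfolding shell_def using cube_mono[of "Suc n" n'] that by auto
    then show ?thesis unfolding shell_def by auto
  qed
  then show ?thesis unfolding disjoint_family_on_def
    by (metis Int_commute linorder_neqE_nat)
qed

lemma shell_sum: "(\<Sum>n<m. \<Sum>k\<in>shell n. h k) = (\<Sum>k\<in>cube m. h k)"
proof (induction m)
  case 0
  then show ?case by (simp add: cube_0)
next
  case (Suc m)
  have "(\<Sum>k\<in>cube (Suc m). h k) = (\<Sum>k\<in>cube m. h k) + (\<Sum>k\<in>shell m. h k)"
    using sum.subset_diff[of "cube m" "cube (Suc m)" h] cube_mono[of m "Suc m"] cube_finite[of "Suc m"]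
    by (simp add: shell_def add.commute)
  then show ?case using Suc by simp
qed

lemma Xtr_meas[measurable]: "Xtr a \<epsilon> i m \<in> borel_measurable M"
  unfolding Xtr_def[abs_def] by measurable

lemma Xlin_meas[measurable]: "Xlin a \<epsilon> i \<in> borel_measurable M"
  unfolding Xlin_def[abs_def] by measurable

lemma conv_ae: "AE \<omega> in M. convergent (\<lambda>m. Xtr a \<epsilon> i m \<omega>)"
proof -
  define Z where "Z n \<omega> = (\<Sum>k\<in>shell n. a k * \<epsilon> (i - k) \<omega>)" for n \<omega>
  have fin: "finite (shell n)" for n unfolding shell_def by (simp add: cube_finite)
  have indZ: "indep_vars (\<lambda>_. borel) Z UNIV"
  proof (rule indep_family_blocks[where K="\<lambda>n. (\<lambda>k. i - k) ` shell n" and g="\<lambda>n x. \<Sum>k\<in>shell n. a k * x (i - k)"])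
    show "disjoint_family (\<lambda>n. (\<lambda>k. i - k) ` shell n)"
      using shell_disj unfolding disjoint_family_on_def by (auto, blast)
    show "(\<lambda>x. \<Sum>k\<in>shell n. a k * x (i - k)) \<in> borel_measurable (PiM ((\<lambda>k. i - k) ` shell n) (\<lambda>_. borel))" for n
      by (intro borel_measurable_sum borel_measurable_times borel_measurable_const measurable_component_singleton) auto
    show "Z n \<omega> = (\<Sum>k\<in>shell n. a k * (\<lambda>j\<in>(\<lambda>k. i - k) ` shell n. \<epsilon> j \<omega>) (i - k))" for n \<omega>
      unfolding Z_def by (intro sum.cong) auto
  qed
  have i1: "integrable M (Z n)" for n unfolding Z_def by (auto simp: eps_int1)
  have m0: "expectation (Z n) = 0" for n unfolding Z_def by (simp add: eps_int1 eps_mz)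
  have i2: "integrable M (\<lambda>\<omega>. (Z n \<omega>)^2)" for n unfolding Z_def by (rule lin_sq(1)[OF fin])
  have E2: "expectation (\<lambda>\<omega>. (Z n \<omega>)^2) = (\<Sum>k\<in>shell n. (a k)^2) * \<sigma>2" for n
    unfolding Z_def by (rule lin_sq(2)[OF fin])
  have s0: "0 \<le> \<sigma>2" unfolding \<sigma>2_def by simp
  have sm: "summable (\<lambda>n. expectation (\<lambda>\<omega>. (Z n \<omega>)^2))"
  proof (rule summableI_nonneg_bounded)
    show "0 \<le> expectation (\<lambda>\<omega>. (Z n \<omega>)^2)" for n by simp
    fix m
    have "(\<Sum>n<m. expectation (\<lambda>\<omega>. (Z n \<omega>)^2)) = (\<Sum>k\<in>cube m. (a k)^2) * \<sigma>2"
      unfolding E2 by (simp add: shell_sum sum_distrib_right[symmetric])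
    also have "\<dots> \<le> infsum (\<lambda>k. (a k)^2) {k. vge k 0} * \<sigma>2"
      by (intro mult_right_mono finite_sum_le_infsum summ cube_finite s0) (auto simp: cube_vge)
    finally show "(\<Sum>n<m. expectation (\<lambda>\<omega>. (Z n \<omega>)^2)) \<le> infsum (\<lambda>k. (a k)^2) {k. vge k 0} * \<sigma>2" .
  qed
  have "AE \<omega> in M. convergent (\<lambda>m. \<Sum>n<m. Z n \<omega>)"
    by (rule kolm_conv[OF indZ i1 i2 m0 sm])
  moreover have "(\<Sum>n<m. Z n \<omega>) = Xtr a \<epsilon> i m \<omega>" for m \<omega>
    unfolding Z_def Xtr_def by (rule shell_sum)
  ultimately show ?thesis by simp
qed

lemma lim_shift:
  fixes X Y d :: "nat \<Rightarrow> real"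
  assumes X: "convergent X" and XY: "\<And>m. m \<ge> 1 \<Longrightarrow> X m = d m + Y m" and d: "d \<longlonglongrightarrow> d0"
  shows "lim X = d0 + lim Y"
proof -
  obtain l where l: "X \<longlonglongrightarrow> l" using X by (auto simp: convergent_def)
  have "(\<lambda>m. X m - d m) \<longlonglongrightarrow> l - d0" by (intro tendsto_diff l d)
  moreover have "eventually (\<lambda>m. X m - d m = Y m) sequentially"
    using XY by (auto simp: eventually_sequentially intro!: exI[of _ 1])
  ultimately have "Y \<longlonglongrightarrow> l - d0" by (rule Lim_transform_eventually)
  then have "lim Y = l - d0" by (rule limI)
  moreover have "lim X = l" using l by (rule limI)
  ultimately show ?thesis by simp
qed

lemma Xtr0_split: "m \<ge> 1 \<Longrightarrow> Xtr a \<epsilon> 0 m \<omega> = a 0 * \<epsilon> 0 \<omega> + (\<Sum>k\<in>cube m - {0}. a k * \<epsilon> (- k) \<omega>)"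
  unfolding Xtr_def by (subst sum.remove[OF cube_finite zero_in_cube]) auto

lemma dens_tr1:
  assumes m: "m \<ge> 1"
  shows "\<exists>p. (\<forall>x. 0 \<le> p x) \<and> distributed M lborel (Xtr a \<epsilon> 0 m) (\<lambda>x. ennreal (p x))
            \<and> lipschitz_on (L / (a 0)^2) UNIV p \<and> (\<forall>x. p x \<le> B / \<bar>a 0\<bar>)"
proof -
  define W where "W \<omega> = (\<Sum>k\<in>cube m - {0}. a k * \<epsilon> (- k) \<omega>)" for \<omega>
  have eq: "Xtr a \<epsilon> 0 m = (\<lambda>\<omega>. a 0 * \<epsilon> 0 \<omega> + W \<omega>)"
    using Xtr0_split[OF m] unfolding W_def by (intro ext) simp
  have gm: "(\<lambda>x. \<Sum>k\<in>cube m - {0}. a k * x (- k)) \<in> borel_measurable (PiM (- {0}) (\<lambda>_. borel))"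
    by (intro borel_measurable_sum borel_measurable_times borel_measurable_const measurable_component_singleton) auto
  have iv0: "indep_var borel (\<lambda>\<omega>. (\<lambda>x. x 0) (\<lambda>j\<in>{0}. \<epsilon> j \<omega>)) borel (\<lambda>\<omega>. (\<lambda>x. \<Sum>k\<in>cube m - {0}. a k * x (- k)) (\<lambda>j\<in>- {0}. \<epsilon> j \<omega>))"
    by (rule indep_block[OF ind _ _ _ _ gm]) (auto intro: measurable_component_singleton)
  have iv: "indep_var borel (\<epsilon> 0) borel W"
    by (rule indep_var_cong'[OF iv0]) (auto simp: W_def intro!: sum.cong)
  show ?thesis unfolding eq by (rule dens1[OF eps_dist pe0 peB Lip a0 iv])
qed

lemma dens_lim1:
  "\<exists>p. (\<forall>x. 0 \<le> p x) \<and> distributed M lborel (Xlin a \<epsilon> 0) (\<lambda>x. ennreal (p x))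
            \<and> lipschitz_on (L / (a 0)^2) UNIV p \<and> (\<forall>x. p x \<le> B / \<bar>a 0\<bar>)"
proof -
  define W where "W \<omega> = lim (\<lambda>m. \<Sum>k\<in>cube m - {0}. a k * \<epsilon> (- k) \<omega>)" for \<omega>
  have gm: "(\<lambda>x. lim (\<lambda>m. \<Sum>k\<in>cube m - {0}. a k * x (- k))) \<in> borel_measurable (PiM (- {0}) (\<lambda>_. borel))"
    by (intro borel_measurable_lim_metric borel_measurable_sum borel_measurable_times borel_measurable_const measurable_component_singleton) auto
  have iv0: "indep_var borel (\<lambda>\<omega>. (\<lambda>x. x 0) (\<lambda>j\<in>{0}. \<epsilon> j \<omega>)) borel (\<lambda>\<omega>. (\<lambda>x. lim (\<lambda>m. \<Sum>k\<in>cube m - {0}. a k * x (- k))) (\<lambda>j\<in>- {0}. \<epsilon> j \<omega>))"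
    by (rule indep_block[OF ind _ _ _ _ gm]) (auto intro: measurable_component_singleton)
  have iv: "indep_var borel (\<epsilon> 0) borel W"
    by (rule indep_var_cong'[OF iv0]) (auto simp: W_def intro!: sum.cong arg_cong[where f=lim] ext)
  obtain p where p: "(\<forall>x. 0 \<le> p x)" "distributed M lborel (\<lambda>\<omega>. a 0 * \<epsilon> 0 \<omega> + W \<omega>) (\<lambda>x. ennreal (p x))"
      "lipschitz_on (L / (a 0)^2) UNIV p" "(\<forall>x. p x \<le> B / \<bar>a 0\<bar>)"
    using dens1[OF eps_dist pe0 peB Lip a0 iv] by blast
  have ae: "AE \<omega> in M. a 0 * \<epsilon> 0 \<omega> + W \<omega> = Xlin a \<epsilon> 0 \<omega>"
    using conv_ae[of 0]
  proof (rule AE_mp, intro AE_I2 impI)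
    fix \<omega> assume c: "convergent (\<lambda>m. Xtr a \<epsilon> 0 m \<omega>)"
    show "a 0 * \<epsilon> 0 \<omega> + W \<omega> = Xlin a \<epsilon> 0 \<omega>"
      unfolding Xlin_def W_def
      by (rule lim_shift[OF c Xtr0_split tendsto_const, symmetric])
  qed
  have "distributed M lborel (Xlin a \<epsilon> 0) (\<lambda>x. ennreal (p x))"
    by (rule distributed_AE_cong[OF p(2) ae]) simp
  then show ?thesis using p by blast
qed

lemma pair_gen:
  fixes gU gV :: "(int ^ 'd \<Rightarrow> real) \<Rightarrow> real"
  assumes j12: "j1 \<noteq> j2"
    and gU[measurable]: "gU \<in> borel_measurable (PiM (UNIV - {j1, j2}) (\<lambda>_. borel))"
    and gV[measurable]: "gV \<in> borel_measurable (PiM (UNIV - {j1, j2}) (\<lambda>_. borel))"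
  shows "\<exists>q. (\<forall>z. 0 \<le> q z) \<and>
     distributed M (lborel \<Otimes>\<^sub>M lborel)
       (\<lambda>\<omega>. (a 0 * \<epsilon> j1 \<omega> + c * \<epsilon> j2 \<omega> + gU (\<lambda>j\<in>UNIV - {j1, j2}. \<epsilon> j \<omega>),
              a 0 * \<epsilon> j2 \<omega> + gV (\<lambda>j\<in>UNIV - {j1, j2}. \<epsilon> j \<omega>))) (\<lambda>z. ennreal (q z))
     \<and> (\<forall>z. q z \<le> (B / \<bar>a 0\<bar>)^2)"
proof -
  define R where "R = UNIV - {j1, j2}"
  define U where "U \<omega> = gU (\<lambda>j\<in>R. \<epsilon> j \<omega>)" for \<omega>
  define V where "V \<omega> = gV (\<lambda>j\<in>R. \<epsilon> j \<omega>)" for \<omega>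
  have gU'[measurable]: "gU \<in> borel_measurable (PiM R (\<lambda>_. borel))" using gU unfolding R_def .
  have gV'[measurable]: "gV \<in> borel_measurable (PiM R (\<lambda>_. borel))" using gV unfolding R_def .
  have rR: "(\<lambda>\<omega>. \<lambda>j\<in>R. \<epsilon> j \<omega>) \<in> measurable M (PiM R (\<lambda>_. borel))"
    by (intro measurable_restrict) auto
  have Um[measurable]: "U \<in> borel_measurable M" unfolding U_def using measurable_compose[OF rR gU'] by (simp add: comp_def)
  have Vm[measurable]: "V \<in> borel_measurable M" unfolding V_def using measurable_compose[OF rR gV'] by (simp add: comp_def)
  define g1 where "g1 x = (x j2, gU (restrict x R), gV (restrict x R))" for x :: "int ^ 'd \<Rightarrow> real"
  have g1m: "g1 \<in> measurable (PiM (UNIV - {j1}) (\<lambda>_. borel)) (borel \<Otimes>\<^sub>M (borel \<Otimes>\<^sub>M borel))"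
  proof -
    have r: "(\<lambda>x. restrict x R) \<in> measurable (PiM (UNIV - {j1}) (\<lambda>_. borel)) (PiM R (\<lambda>_. borel))"
      by (rule measurable_restrict_subset) (auto simp: R_def)
    have "(\<lambda>x. gU (restrict x R)) \<in> borel_measurable (PiM (UNIV - {j1}) (\<lambda>_. borel))"
      using measurable_compose[OF r gU'] by (simp add: comp_def)
    moreover have "(\<lambda>x. gV (restrict x R)) \<in> borel_measurable (PiM (UNIV - {j1}) (\<lambda>_. borel))"
      using measurable_compose[OF r gV'] by (simp add: comp_def)
    moreover have "(\<lambda>x. x j2) \<in> borel_measurable (PiM (UNIV - {j1}) (\<lambda>_. borel))"
      by (rule measurable_component_singleton) (use j12 in auto)
    ultimately show ?thesis unfolding g1_def by (intro measurable_Pair) auto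
  qed
  have f1m: "(\<lambda>x. x j1) \<in> borel_measurable (PiM {j1} (\<lambda>_. borel))"
    by (rule measurable_component_singleton) auto
  have j1eq: "(\<lambda>\<omega>. (\<lambda>j\<in>{j1}. \<epsilon> j \<omega>) j1) = \<epsilon> j1" by auto
  have g1eq: "(\<lambda>\<omega>. g1 (\<lambda>j\<in>UNIV - {j1}. \<epsilon> j \<omega>)) = (\<lambda>\<omega>. (\<epsilon> j2 \<omega>, U \<omega>, V \<omega>))"
  proof -
    have "restrict (\<lambda>j\<in>UNIV - {j1}. \<epsilon> j \<omega>) R = (\<lambda>j\<in>R. \<epsilon> j \<omega>)" for \<omega>
      by (auto simp: R_def restrict_def)
    then show ?thesis using j12 by (auto simp: g1_def U_def V_def)
  qed
  have iv1: "distr M (borel \<Otimes>\<^sub>M (borel \<Otimes>\<^sub>M (borel \<Otimes>\<^sub>M borel))) (\<lambda>\<omega>. (\<epsilon> j1 \<omega>, \<epsilon> j2 \<omega>, U \<omega>, V \<omega>))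
       = distr M borel (\<epsilon> j1) \<Otimes>\<^sub>M distr M (borel \<Otimes>\<^sub>M (borel \<Otimes>\<^sub>M borel)) (\<lambda>\<omega>. (\<epsilon> j2 \<omega>, U \<omega>, V \<omega>))"
    using block_distr[OF ind _ _ _ f1m g1m] fun_cong[OF g1eq] unfolding j1eq by auto
  define g2 where "g2 x = (gU x, gV x)" for x :: "int ^ 'd \<Rightarrow> real"
  have g2m: "g2 \<in> measurable (PiM R (\<lambda>_. borel)) (borel \<Otimes>\<^sub>M borel)"
    unfolding g2_def by (intro measurable_Pair) auto
  have f2m: "(\<lambda>x. x j2) \<in> borel_measurable (PiM {j2} (\<lambda>_. borel))"
    by (rule measurable_component_singleton) auto
  have j2eq: "(\<lambda>\<omega>. (\<lambda>j\<in>{j2}. \<epsilon> j \<omega>) j2) = \<epsilon> j2" by auto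
  have g2eq: "(\<lambda>\<omega>. g2 (\<lambda>j\<in>R. \<epsilon> j \<omega>)) = (\<lambda>\<omega>. (U \<omega>, V \<omega>))"
    by (auto simp: g2_def U_def V_def)
  have iv2: "distr M (borel \<Otimes>\<^sub>M (borel \<Otimes>\<^sub>M borel)) (\<lambda>\<omega>. (\<epsilon> j2 \<omega>, U \<omega>, V \<omega>))
       = distr M borel (\<epsilon> j2) \<Otimes>\<^sub>M distr M (borel \<Otimes>\<^sub>M borel) (\<lambda>\<omega>. (U \<omega>, V \<omega>))"
    using block_distr[OF ind _ _ _ f2m g2m] fun_cong[OF g2eq] unfolding j2eq by (auto simp: R_def)
  have pem: "pe \<in> borel_measurable borel"
    using lipschitz_on_continuous_on[OF Lip] by (rule borel_measurable_continuous_onI)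
  show ?thesis
    using dens2[OF eps_dist eps_dist pe0 peB pem a0 Um Vm iv1 iv2, of c]
    unfolding U_def V_def R_def .
qed

lemma pair_case:
  fixes gU gV :: "(int ^ 'd \<Rightarrow> real) \<Rightarrow> real" and X0 X1 :: "'a \<Rightarrow> real"
  assumes i: "i \<noteq> 0"
    and gU[measurable]: "gU \<in> borel_measurable (PiM (UNIV - {0, i}) (\<lambda>_. borel))"
    and gV[measurable]: "gV \<in> borel_measurable (PiM (UNIV - {0, i}) (\<lambda>_. borel))"
    and X0m[measurable]: "X0 \<in> borel_measurable M" and X1m[measurable]: "X1 \<in> borel_measurable M"
    and ae0: "AE \<omega> in M. X0 \<omega> = a 0 * \<epsilon> 0 \<omega> + c * \<epsilon> i \<omega> + gU (\<lambda>j\<in>UNIV - {0, i}. \<epsilon> j \<omega>)"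
    and ae1: "AE \<omega> in M. X1 \<omega> = a 0 * \<epsilon> i \<omega> + c' * \<epsilon> 0 \<omega> + gV (\<lambda>j\<in>UNIV - {0, i}. \<epsilon> j \<omega>)"
    and cc: "c = 0 \<or> c' = 0"
  shows "\<exists>q. (\<forall>z. 0 \<le> q z) \<and> distributed M (lborel \<Otimes>\<^sub>M lborel) (\<lambda>\<omega>. (X0 \<omega>, X1 \<omega>)) (\<lambda>z. ennreal (q z))
          \<and> (\<forall>z. q z \<le> (B / \<bar>a 0\<bar>)^2)"
proof (cases "c' = 0")
  case True
  obtain q where q: "\<forall>z. 0 \<le> q z" "\<forall>z. q z \<le> (B / \<bar>a 0\<bar>)^2"
    "distributed M (lborel \<Otimes>\<^sub>M lborel)
       (\<lambda>\<omega>. (a 0 * \<epsilon> 0 \<omega> + c * \<epsilon> i \<omega> + gU (\<lambda>j\<in>UNIV - {0, i}. \<epsilon> j \<omega>),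
              a 0 * \<epsilon> i \<omega> + gV (\<lambda>j\<in>UNIV - {0, i}. \<epsilon> j \<omega>))) (\<lambda>z. ennreal (q z))"
    using pair_gen[of 0 i gU gV c] i by auto
  have "AE \<omega> in M. (a 0 * \<epsilon> 0 \<omega> + c * \<epsilon> i \<omega> + gU (\<lambda>j\<in>UNIV - {0, i}. \<epsilon> j \<omega>),
              a 0 * \<epsilon> i \<omega> + gV (\<lambda>j\<in>UNIV - {0, i}. \<epsilon> j \<omega>)) = (X0 \<omega>, X1 \<omega>)"
    using ae0 ae1 True by auto
  then have "distributed M (lborel \<Otimes>\<^sub>M lborel) (\<lambda>\<omega>. (X0 \<omega>, X1 \<omega>)) (\<lambda>z. ennreal (q z))"
    by (rule distributed_AE_cong[OF q(3)]) simp
  then show ?thesis using q by blast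
next
  case False
  then have c0: "c = 0" using cc by auto
  have s: "UNIV - {i, 0} = UNIV - {0, i}" by auto
  obtain q where q: "\<forall>z. 0 \<le> q z" "\<forall>z. q z \<le> (B / \<bar>a 0\<bar>)^2"
    "distributed M (lborel \<Otimes>\<^sub>M lborel)
       (\<lambda>\<omega>. (a 0 * \<epsilon> i \<omega> + c' * \<epsilon> 0 \<omega> + gV (\<lambda>j\<in>UNIV - {0, i}. \<epsilon> j \<omega>),
              a 0 * \<epsilon> 0 \<omega> + gU (\<lambda>j\<in>UNIV - {0, i}. \<epsilon> j \<omega>))) (\<lambda>z. ennreal (q z))"
    using pair_gen[of i 0 gV gU c'] i unfolding s by auto
  have sw: "distributed M (lborel \<Otimes>\<^sub>M lborel)
       (\<lambda>\<omega>. (a 0 * \<epsilon> 0 \<omega> + gU (\<lambda>j\<in>UNIV - {0, i}. \<epsilon> j \<omega>),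
              a 0 * \<epsilon> i \<omega> + c' * \<epsilon> 0 \<omega> + gV (\<lambda>j\<in>UNIV - {0, i}. \<epsilon> j \<omega>))) (\<lambda>(x, y). ennreal (q (y, x)))"
    by (rule distributed_swap[OF sigma_finite_lborel sigma_finite_lborel q(3)])
  have deq: "(\<lambda>(x, y). ennreal (q (y, x))) = (\<lambda>z. ennreal (q (snd z, fst z)))" by auto
  have "AE \<omega> in M. (a 0 * \<epsilon> 0 \<omega> + gU (\<lambda>j\<in>UNIV - {0, i}. \<epsilon> j \<omega>),
              a 0 * \<epsilon> i \<omega> + c' * \<epsilon> 0 \<omega> + gV (\<lambda>j\<in>UNIV - {0, i}. \<epsilon> j \<omega>)) = (X0 \<omega>, X1 \<omega>)"
    using ae0 ae1 c0 by auto
  then have "distributed M (lborel \<Otimes>\<^sub>M lborel) (\<lambda>\<omega>. (X0 \<omega>, X1 \<omega>)) (\<lambda>z. ennreal (q (snd z, fst z)))"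
    by (rule distributed_AE_cong[OF sw[unfolded deq]]) simp
  then show ?thesis using q by (intro exI[of _ "\<lambda>z. q (snd z, fst z)"]) auto
qed

lemma sum_split2:
  assumes "finite S" "x \<in> S" "x \<noteq> y"
  shows "sum h S = h x + (if y \<in> S then h y else 0) + sum h (S - {x, y})"
proof -
  have "sum h S = h x + sum h (S - {x})" using assms by (simp add: sum.remove)
  moreover have "sum h (S - {x}) = (if y \<in> S then h y else 0) + sum h (S - {x, y})"
  proof (cases "y \<in> S")
    case True
    then have "sum h (S - {x}) = h y + sum h (S - {x} - {y})" using assms by (intro sum.remove) auto
    moreover have "S - {x} - {y} = S - {x, y}" by auto
    ultimately show ?thesis using True by simp
  next
    case False
    then have "S - {x} = S - {x, y}" by auto
    then show ?thesis using False by simp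
  qed
  ultimately show ?thesis by (simp add: add.assoc)
qed

definition "gUt i m x = (\<Sum>k\<in>cube m - {0, -i}. a k * x (- k))"
definition "gVt i m x = (\<Sum>k\<in>cube m - {0, i}. a k * x (i - k))"

lemma gUt_meas: "gUt i m \<in> borel_measurable (PiM (UNIV - {0, i}) (\<lambda>_. borel))"
  unfolding gUt_def[abs_def]
  by (intro borel_measurable_sum borel_measurable_times borel_measurable_const measurable_component_singleton)
     (auto simp: minus_equation_iff[of _ i])
lemma gVt_meas: "gVt i m \<in> borel_measurable (PiM (UNIV - {0, i}) (\<lambda>_. borel))"
  unfolding gVt_def[abs_def]
  by (intro borel_measurable_sum borel_measurable_times borel_measurable_const measurable_component_singleton) auto

lemma Xtr0_split2:
  assumes i: "i \<noteq> 0" and m: "m \<ge> 1"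
  shows "Xtr a \<epsilon> 0 m \<omega> = a 0 * \<epsilon> 0 \<omega> + (if -i \<in> cube m then a (-i) else 0) * \<epsilon> i \<omega> + gUt i m (\<lambda>j\<in>UNIV - {0, i}. \<epsilon> j \<omega>)"
proof -
  have "Xtr a \<epsilon> 0 m \<omega> = a 0 * \<epsilon> (0 - 0) \<omega> + (if -i \<in> cube m then a (-i) * \<epsilon> (0 - - i) \<omega> else 0)
      + (\<Sum>k\<in>cube m - {0, -i}. a k * \<epsilon> (0 - k) \<omega>)"
    unfolding Xtr_def by (rule sum_split2[OF cube_finite zero_in_cube[OF m]]) (use i in auto)
  moreover have "(\<Sum>k\<in>cube m - {0, -i}. a k * \<epsilon> (0 - k) \<omega>) = gUt i m (\<lambda>j\<in>UNIV - {0, i}. \<epsilon> j \<omega>)"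
    unfolding gUt_def by (intro sum.cong) (auto simp: minus_equation_iff[of _ i])
  ultimately show ?thesis by simp
qed

lemma Xtri_split2:
  assumes i: "i \<noteq> 0" and m: "m \<ge> 1"
  shows "Xtr a \<epsilon> i m \<omega> = a 0 * \<epsilon> i \<omega> + (if i \<in> cube m then a i else 0) * \<epsilon> 0 \<omega> + gVt i m (\<lambda>j\<in>UNIV - {0, i}. \<epsilon> j \<omega>)"
proof -
  have "Xtr a \<epsilon> i m \<omega> = a 0 * \<epsilon> (i - 0) \<omega> + (if i \<in> cube m then a i * \<epsilon> (i - i) \<omega> else 0)
      + (\<Sum>k\<in>cube m - {0, i}. a k * \<epsilon> (i - k) \<omega>)"
    unfolding Xtr_def by (rule sum_split2[OF cube_finite zero_in_cube[OF m]]) (use i in auto)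
  moreover have "(\<Sum>k\<in>cube m - {0, i}. a k * \<epsilon> (i - k) \<omega>) = gVt i m (\<lambda>j\<in>UNIV - {0, i}. \<epsilon> j \<omega>)"
    unfolding gVt_def by (intro sum.cong) auto
  ultimately show ?thesis by simp
qed

lemma dens_tr2:
  assumes i: "i \<noteq> 0" and m: "m \<ge> 1"
  shows "\<exists>q. (\<forall>z. 0 \<le> q z) \<and> distributed M (lborel \<Otimes>\<^sub>M lborel) (\<lambda>\<omega>. (Xtr a \<epsilon> 0 m \<omega>, Xtr a \<epsilon> i m \<omega>)) (\<lambda>z. ennreal (q z))
          \<and> (\<forall>z. q z \<le> (B / \<bar>a 0\<bar>)^2)"
proof (rule pair_case[OF i gUt_meas gVt_meas Xtr_meas Xtr_meas])
  show "AE \<omega> in M. Xtr a \<epsilon> 0 m \<omega> = a 0 * \<epsilon> 0 \<omega> + (if -i \<in> cube m then a (-i) else 0) * \<epsilon> i \<omega> + gUt i m (\<lambda>j\<in>UNIV - {0, i}. \<epsilon> j \<omega>)"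
    using Xtr0_split2[OF i m] by simp
  show "AE \<omega> in M. Xtr a \<epsilon> i m \<omega> = a 0 * \<epsilon> i \<omega> + (if i \<in> cube m then a i else 0) * \<epsilon> 0 \<omega> + gVt i m (\<lambda>j\<in>UNIV - {0, i}. \<epsilon> j \<omega>)"
    using Xtri_split2[OF i m] by simp
  show "(if -i \<in> cube m then a (-i) else 0) = 0 \<or> (if i \<in> cube m then a i else 0) = 0"
    using vge_antisym[of i] cube_vge[of i m] cube_vge[of "-i" m] i by auto
qed

lemma dens_lim2:
  assumes i: "i \<noteq> 0"
  shows "\<exists>q. (\<forall>z. 0 \<le> q z) \<and> distributed M (lborel \<Otimes>\<^sub>M lborel) (\<lambda>\<omega>. (Xlin a \<epsilon> 0 \<omega>, Xlin a \<epsilon> i \<omega>)) (\<lambda>z. ennreal (q z))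
          \<and> (\<forall>z. q z \<le> (B / \<bar>a 0\<bar>)^2)"
proof -
  define gU where "gU x = lim (\<lambda>m. gUt i m x)" for x
  define gV where "gV x = lim (\<lambda>m. gVt i m x)" for x
  have gUm: "gU \<in> borel_measurable (PiM (UNIV - {0, i}) (\<lambda>_. borel))"
    unfolding gU_def[abs_def] by (intro borel_measurable_lim_metric gUt_meas)
  have gVm: "gV \<in> borel_measurable (PiM (UNIV - {0, i}) (\<lambda>_. borel))"
    unfolding gV_def[abs_def] by (intro borel_measurable_lim_metric gVt_meas)
  show ?thesis
  proof (rule pair_case[OF i gUm gVm Xlin_meas Xlin_meas])
    show "AE \<omega> in M. Xlin a \<epsilon> 0 \<omega> = a 0 * \<epsilon> 0 \<omega> + (if vge (-i) 0 then a (-i) else 0) * \<epsilon> i \<omega> + gU (\<lambda>j\<in>UNIV - {0, i}. \<epsilon> j \<omega>)"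
      using conv_ae[of 0]
    proof (rule AE_mp, intro AE_I2 impI)
      fix \<omega> assume c: "convergent (\<lambda>m. Xtr a \<epsilon> 0 m \<omega>)"
      have dt: "(\<lambda>m. a 0 * \<epsilon> 0 \<omega> + (if -i \<in> cube m then a (-i) else 0) * \<epsilon> i \<omega>) \<longlonglongrightarrow> a 0 * \<epsilon> 0 \<omega> + (if vge (-i) 0 then a (-i) else 0) * \<epsilon> i \<omega>"
        by (intro tendsto_intros cube_ind_tendsto)
      show "Xlin a \<epsilon> 0 \<omega> = a 0 * \<epsilon> 0 \<omega> + (if vge (-i) 0 then a (-i) else 0) * \<epsilon> i \<omega> + gU (\<lambda>j\<in>UNIV - {0, i}. \<epsilon> j \<omega>)"
        unfolding Xlin_def gU_def
        by (rule lim_shift[where d="\<lambda>m. a 0 * \<epsilon> 0 \<omega> + (if -i \<in> cube m then a (-i) else 0) * \<epsilon> i \<omega>"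
              and Y="\<lambda>m. gUt i m (\<lambda>j\<in>UNIV - {0, i}. \<epsilon> j \<omega>)", OF c Xtr0_split2[OF i] dt])
    qed
    show "AE \<omega> in M. Xlin a \<epsilon> i \<omega> = a 0 * \<epsilon> i \<omega> + (if vge i 0 then a i else 0) * \<epsilon> 0 \<omega> + gV (\<lambda>j\<in>UNIV - {0, i}. \<epsilon> j \<omega>)"
      using conv_ae[of i]
    proof (rule AE_mp, intro AE_I2 impI)
      fix \<omega> assume c: "convergent (\<lambda>m. Xtr a \<epsilon> i m \<omega>)"
      have dt: "(\<lambda>m. a 0 * \<epsilon> i \<omega> + (if i \<in> cube m then a i else 0) * \<epsilon> 0 \<omega>) \<longlonglongrightarrow> a 0 * \<epsilon> i \<omega> + (if vge i 0 then a i else 0) * \<epsilon> 0 \<omega>"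
        by (intro tendsto_intros cube_ind_tendsto)
      show "Xlin a \<epsilon> i \<omega> = a 0 * \<epsilon> i \<omega> + (if vge i 0 then a i else 0) * \<epsilon> 0 \<omega> + gV (\<lambda>j\<in>UNIV - {0, i}. \<epsilon> j \<omega>)"
        unfolding Xlin_def gV_def
        by (rule lim_shift[where d="\<lambda>m. a 0 * \<epsilon> i \<omega> + (if i \<in> cube m then a i else 0) * \<epsilon> 0 \<omega>"
              and Y="\<lambda>m. gVt i m (\<lambda>j\<in>UNIV - {0, i}. \<epsilon> j \<omega>)", OF c Xtri_split2[OF i] dt])
    qed
    show "(if vge (-i) 0 then a (-i) else 0) = 0 \<or> (if vge i 0 then a i else 0) = 0"
      using vge_antisym[of i] i by auto
  qed
qed

end

theorem lemma1:
  fixes M :: "'a measure" and \<epsilon> :: "int ^ 'd::finite \<Rightarrow> 'a \<Rightarrow> real"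
    and a :: "int ^ 'd \<Rightarrow> real" and pe :: "real \<Rightarrow> real"
  assumes "prob_space M"
    and "\<forall>i. \<epsilon> i \<in> borel_measurable M"
    and "prob_space.indep_vars M (\<lambda>_. borel) \<epsilon> UNIV"
    and "\<forall>i. distr M borel (\<epsilon> i) = distr M borel (\<epsilon> 0)"
    and "integrable M (\<epsilon> 0)" and "integral\<^sup>L M (\<epsilon> 0) = 0"
    and "integrable M (\<lambda>\<omega>. (\<epsilon> 0 \<omega>)^2)"
    and "(\<lambda>k. (a k)^2) summable_on {k. vge k 0}"
    and "a 0 \<noteq> 0"
    and "\<forall>x. 0 \<le> pe x"
    and "distributed M lborel (\<epsilon> 0) (\<lambda>x. ennreal (pe x))"
    and "\<exists>L. lipschitz_on L UNIV pe"
  shows "conditionD M a \<epsilon>"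
proof -
  interpret prob_space M by fact
  obtain L where Lip: "lipschitz_on L UNIV pe" using assms(12) by blast
  obtain B where B: "\<forall>x. pe x \<le> B"
    using density_bounded[OF assms(11) _ Lip] assms(10) by blast
  interpret lfield M \<epsilon> a pe L B
    by unfold_locales (use assms Lip B in auto)
  obtain p where p: "\<forall>x. 0 \<le> p x" "distributed M lborel (Xlin a \<epsilon> 0) (\<lambda>x. ennreal (p x))"
      "lipschitz_on (L / (a 0)^2) UNIV p" "\<forall>x. p x \<le> B / \<bar>a 0\<bar>"
    using dens_lim1 by blast
  have "\<forall>m. \<exists>pp. m \<ge> 1 \<longrightarrow> (\<forall>x. 0 \<le> pp x) \<and> distributed M lborel (Xtr a \<epsilon> 0 m) (\<lambda>x. ennreal (pp x))
            \<and> lipschitz_on (L / (a 0)^2) UNIV pp \<and> (\<forall>x. pp x \<le> B / \<bar>a 0\<bar>)"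
    using dens_tr1 by blast
  then obtain pm where pm: "\<And>m. m \<ge> 1 \<Longrightarrow> (\<forall>x. 0 \<le> pm m x) \<and> distributed M lborel (Xtr a \<epsilon> 0 m) (\<lambda>x. ennreal (pm m x))
            \<and> lipschitz_on (L / (a 0)^2) UNIV (pm m) \<and> (\<forall>x. pm m x \<le> B / \<bar>a 0\<bar>)"
    by metis
  have "\<forall>i. \<exists>qq. i \<noteq> 0 \<longrightarrow> (\<forall>z. 0 \<le> qq z) \<and> distributed M (lborel \<Otimes>\<^sub>M lborel) (\<lambda>\<omega>. (Xlin a \<epsilon> 0 \<omega>, Xlin a \<epsilon> i \<omega>)) (\<lambda>z. ennreal (qq z))
          \<and> (\<forall>z. qq z \<le> (B / \<bar>a 0\<bar>)^2)"
    using dens_lim2 by blast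
  then obtain q where q: "\<And>i. i \<noteq> 0 \<Longrightarrow> (\<forall>z. 0 \<le> q i z) \<and> distributed M (lborel \<Otimes>\<^sub>M lborel) (\<lambda>\<omega>. (Xlin a \<epsilon> 0 \<omega>, Xlin a \<epsilon> i \<omega>)) (\<lambda>z. ennreal (q i z))
          \<and> (\<forall>z. q i z \<le> (B / \<bar>a 0\<bar>)^2)"
    by metis
  have "\<forall>m. \<exists>Q. \<forall>i. m \<ge> 1 \<and> i \<noteq> 0 \<longrightarrow> (\<forall>z. 0 \<le> Q i z) \<and> distributed M (lborel \<Otimes>\<^sub>M lborel) (\<lambda>\<omega>. (Xtr a \<epsilon> 0 m \<omega>, Xtr a \<epsilon> i m \<omega>)) (\<lambda>z. ennreal (Q i z))
          \<and> (\<forall>z. Q i z \<le> (B / \<bar>a 0\<bar>)^2)"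
  proof
    fix m
    have "\<forall>i. \<exists>qq. m \<ge> 1 \<and> i \<noteq> 0 \<longrightarrow> (\<forall>z. 0 \<le> qq z) \<and> distributed M (lborel \<Otimes>\<^sub>M lborel) (\<lambda>\<omega>. (Xtr a \<epsilon> 0 m \<omega>, Xtr a \<epsilon> i m \<omega>)) (\<lambda>z. ennreal (qq z))
          \<and> (\<forall>z. qq z \<le> (B / \<bar>a 0\<bar>)^2)"
      using dens_tr2 by blast
    then show "\<exists>Q. \<forall>i. m \<ge> 1 \<and> i \<noteq> 0 \<longrightarrow> (\<forall>z. 0 \<le> Q i z) \<and> distributed M (lborel \<Otimes>\<^sub>M lborel) (\<lambda>\<omega>. (Xtr a \<epsilon> 0 m \<omega>, Xtr a \<epsilon> i m \<omega>)) (\<lambda>z. ennreal (Q i z))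
          \<and> (\<forall>z. Q i z \<le> (B / \<bar>a 0\<bar>)^2)"
      by (rule choice)
  qed
  then obtain qm where qm: "\<And>m i. m \<ge> 1 \<Longrightarrow> i \<noteq> 0 \<Longrightarrow> (\<forall>z. 0 \<le> qm m i z) \<and> distributed M (lborel \<Otimes>\<^sub>M lborel) (\<lambda>\<omega>. (Xtr a \<epsilon> 0 m \<omega>, Xtr a \<epsilon> i m \<omega>)) (\<lambda>z. ennreal (qm m i z))
          \<and> (\<forall>z. qm m i z \<le> (B / \<bar>a 0\<bar>)^2)"
    by metis
  have part1: "\<exists>(p :: real \<Rightarrow> real) (pm :: nat \<Rightarrow> real \<Rightarrow> real) (c0 :: real).
       (\<forall>x. 0 \<le> p x) \<and>
       distributed M lborel (Xlin a \<epsilon> 0) (\<lambda>x. ennreal (p x)) \<and>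
       lipschitz_on c0 UNIV p \<and>
       (\<forall>m\<ge>1. (\<forall>x. 0 \<le> pm m x) \<and>
          distributed M lborel (Xtr a \<epsilon> 0 m) (\<lambda>x. ennreal (pm m x)) \<and>
          lipschitz_on c0 UNIV (pm m)) \<and>
       bdd_above (range p) \<and>
       bdd_above {pm m x | m x. m \<ge> 1}"
  proof (intro exI conjI allI impI)
    show "bdd_above (range p)" using p(4) by (intro bdd_aboveI[of _ "B / \<bar>a 0\<bar>"]) auto
    show "bdd_above {pm m x | m x. m \<ge> 1}" using pm by (intro bdd_aboveI[of _ "B / \<bar>a 0\<bar>"]) auto
  qed (use p pm in auto)
  have part2: "\<exists>(q :: int ^ 'd \<Rightarrow> real \<times> real \<Rightarrow> real) (qm :: nat \<Rightarrow> int ^ 'd \<Rightarrow> real \<times> real \<Rightarrow> real).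
       (\<forall>i. i \<noteq> 0 \<longrightarrow> (\<forall>xy. 0 \<le> q i xy) \<and>
          distributed M (lborel \<Otimes>\<^sub>M lborel) (\<lambda>\<omega>. (Xlin a \<epsilon> 0 \<omega>, Xlin a \<epsilon> i \<omega>))
            (\<lambda>xy. ennreal (q i xy))) \<and>
       (\<forall>m\<ge>1. \<forall>i. i \<noteq> 0 \<longrightarrow> (\<forall>xy. 0 \<le> qm m i xy) \<and>
          distributed M (lborel \<Otimes>\<^sub>M lborel) (\<lambda>\<omega>. (Xtr a \<epsilon> 0 m \<omega>, Xtr a \<epsilon> i m \<omega>))
            (\<lambda>xy. ennreal (qm m i xy))) \<and>
       bdd_above {q i xy | i xy. i \<noteq> 0} \<and>
       bdd_above {qm m i xy | m i xy. m \<ge> 1 \<and> i \<noteq> 0}"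
  proof (intro exI conjI allI impI)
    show "bdd_above {q i xy | i xy. i \<noteq> 0}" using q by (intro bdd_aboveI[of _ "(B / \<bar>a 0\<bar>)^2"]) auto
    show "bdd_above {qm m i xy | m i xy. m \<ge> 1 \<and> i \<noteq> 0}" using qm by (intro bdd_aboveI[of _ "(B / \<bar>a 0\<bar>)^2"]) auto
  qed (use q qm in auto)
  show ?thesis unfolding conditionD_def using part1 part2 by blast
qed


end
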